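(* Let \(\mathcal G\) be an étale topological groupoid whose object space \(\mathcal G^{(0)}\) is sober, and let \(S=\mathrm{Bis}(\mathcal G)\) with idempotent part \(E\subseteq S\). Call \(e\in E\) irreducible if \(e\neq1\) and \(e=e_1e_2\) with \(e_1,e_2\in E\) implies \(e_1=e\) or \(e_2=e\). For irreducible \(e\in E\), define \(\varphi_e\colon E\to\{0,1\}\) by \(\varphi_e(f)=0\) if and only if \(f\le e\). Then each \(\varphi_e\) is a character on \(E\), and the set \(X\subseteq\hat E\) of all \(\varphi_e\) with \(e\) irreducible is \(S\)-invariant. Moreover, the restriction of \(\mathcal G(S)\) to \(X\) is naturally isomorphic to \(\mathcal G\).
   Context: A topological space is sober if every non-empty irreducible closed subset is the closure of a unique point. A closed set \(A\) is irreducible if \(A=A_1\cup A_2\) with \(A_i\) closed implies \(A_1=A\) or \(A_2=A\). A bisection of a topological groupoid is an open subset of the arrow space on which range and source maps are injective and open. A groupoid is étale if bisections cover its arrow space. \(\mathrm{Bis}(\mathcal G)\) is the inverse semigroup of bisections with \(st=\{gh:g\in s,h\in t\}\) and \(s^*=\{g^{-1}:g\in s\}\), unit \(1=\mathcal G^{(0)}\) and zero \(\emptyset\). Its idempotents are exactly the open subsets of \(\mathcal G^{(0)}\), with product \(\cap\) and order \(\subseteq\). For an inverse semigroup \(S\) with idempotents \(E\): a character is a map \(\varphi\colon E\to\{0,1\}\) with \(\varphi(0)=0\), \(\varphi(1)=1\), \(\varphi(ef)=\varphi(e)\varphi(f)\). \(\hat E\) is the set of characters with the topology generated by \(U_e=\{\varphi:\varphi(e)=1\}\).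 \(S\) acts on \(\hat E\) by \(s\cdot\varphi(e)=\varphi(s^*es)\) for \(\varphi\in U_{s^*s}\). \(\mathcal G(S)\) is the germ groupoid of this action. Objects are \(\hat E\). Arrows are classes \([s,\varphi]\) with \(s\in S\), \(\varphi\in U_{s^*s}\), where \((s,\varphi)\sim(t,\psi)\) iff \(\varphi=\psi\) and \(se=te\) for some \(e\in E\) with \(\varphi(e)=1\). The structure maps are \(\mathrm s[s,\varphi]=\varphi\), \(\mathrm r[s,\varphi]=s\cdot\varphi\), \([s,t\cdot\psi][t,\psi]=[st,\psi]\), with the topology generated by the sets \(\{[s,\varphi]:\varphi\in U\}\) for \(U\subseteq U_{s^*s}\) open. The restriction of a groupoid to an invariant subset \(X\) of objects is the subgroupoid of arrows with source (equivalently range) in \(X\). *)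

theory Defs
  imports "HOL-Analysis.Analysis"
begin

definition irreducible_closed_in :: "'a topology \<Rightarrow> 'a set \<Rightarrow> bool" where
  "irreducible_closed_in T A \<longleftrightarrow> closedin T A \<and>
     (\<forall>A1 A2. closedin T A1 \<and> closedin T A2 \<and> A = A1 \<union> A2 \<longrightarrow> A1 = A \<or> A2 = A)"

definition sober :: "'a topology \<Rightarrow> bool" where
  "sober T \<longleftrightarrow> (\<forall>A. A \<noteq> {} \<and> irreducible_closed_in T A \<longrightarrow>
      (\<exists>!x. x \<in> topspace T \<and> A = T closure_of {x}))"

text \<open>Objects are the points of obj_top, arrows the points of arr_top.
  comp g h is the composite gh, defined when src g = rng h.\<close>

record ('o, 'a) tgpd =
  obj_top :: "'o topology"
  arr_top :: "'a topology"
  src :: "'a \<Rightarrow> 'o"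
  rng :: "'a \<Rightarrow> 'o"
  comp :: "'a \<Rightarrow> 'a \<Rightarrow> 'a"
  ginv :: "'a \<Rightarrow> 'a"
  ident :: "'o \<Rightarrow> 'a"

abbreviation objs :: "('o, 'a) tgpd \<Rightarrow> 'o set" where
  "objs G \<equiv> topspace (obj_top G)"

abbreviation arrs :: "('o, 'a) tgpd \<Rightarrow> 'a set" where
  "arrs G \<equiv> topspace (arr_top G)"

definition composable :: "('o, 'a) tgpd \<Rightarrow> ('a \<times> 'a) set" where
  "composable G = {(g, h). g \<in> arrs G \<and> h \<in> arrs G \<and> src G g = rng G h}"

definition topological_groupoid :: "('o, 'a) tgpd \<Rightarrow> bool" where
  "topological_groupoid G \<longleftrightarrow>
     (\<forall>g\<in>arrs G. src G g \<in> objs G \<and> rng G g \<in> objs G \<and> ginv G g \<in> arrs G) \<and>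
     (\<forall>x\<in>objs G. ident G x \<in> arrs G \<and> src G (ident G x) = x \<and> rng G (ident G x) = x) \<and>
     (\<forall>(g, h)\<in>composable G. comp G g h \<in> arrs G \<and>
         src G (comp G g h) = src G h \<and> rng G (comp G g h) = rng G g) \<and>
     (\<forall>g\<in>arrs G. \<forall>h\<in>arrs G. \<forall>k\<in>arrs G. src G g = rng G h \<longrightarrow> src G h = rng G k \<longrightarrow>
         comp G (comp G g h) k = comp G g (comp G h k)) \<and>
     (\<forall>g\<in>arrs G. comp G (ident G (rng G g)) g = g \<and> comp G g (ident G (src G g)) = g) \<and>
     (\<forall>g\<in>arrs G. src G (ginv G g) = rng G g \<and> rng G (ginv G g) = src G g \<and>
         comp G g (ginv G g) = ident G (rng G g) \<and> comp G (ginv G g) g = ident G (src G g)) \<and>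
     continuous_map (arr_top G) (obj_top G) (src G) \<and>
     continuous_map (arr_top G) (obj_top G) (rng G) \<and>
     continuous_map (arr_top G) (arr_top G) (ginv G) \<and>
     continuous_map (obj_top G) (arr_top G) (ident G) \<and>
     continuous_map (subtopology (prod_topology (arr_top G) (arr_top G)) (composable G))
        (arr_top G) (\<lambda>(g, h). comp G g h)"

definition bisection :: "('o, 'a) tgpd \<Rightarrow> 'a set \<Rightarrow> bool" where
  "bisection G B \<longleftrightarrow> openin (arr_top G) B \<and>
     inj_on (src G) B \<and> inj_on (rng G) B \<and>
     open_map (subtopology (arr_top G) B) (obj_top G) (src G) \<and>
     open_map (subtopology (arr_top G) B) (obj_top G) (rng G)"

definition etale :: "('o, 'a) tgpd \<Rightarrow> bool" where
  "etale G \<longleftrightarrow> topological_groupoid G \<and>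
     arrs G \<subseteq> \<Union>{B. bisection G B}"

definition Bis :: "('o, 'a) tgpd \<Rightarrow> 'a set set" where
  "Bis G = {B. bisection G B}"

definition bis_mult :: "('o, 'a) tgpd \<Rightarrow> 'a set \<Rightarrow> 'a set \<Rightarrow> 'a set" where
  "bis_mult G s t = {comp G g h | g h. g \<in> s \<and> h \<in> t \<and> src G g = rng G h}"

definition bis_star :: "('o, 'a) tgpd \<Rightarrow> 'a set \<Rightarrow> 'a set" where
  "bis_star G s = ginv G ` s"

definition bis_one :: "('o, 'a) tgpd \<Rightarrow> 'a set" where
  "bis_one G = ident G ` objs G"

definition bis_zero :: "'a set" where
  "bis_zero = {}"

definition idems :: "'s set \<Rightarrow> ('s \<Rightarrow> 's \<Rightarrow> 's) \<Rightarrow> 's set" where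
  "idems S mul = {e \<in> S. mul e e = e}"

text \<open>Characters E \<rightarrow> {0,1} as boolean functions, normalised to False outside E.\<close>
definition characters :: "'s set \<Rightarrow> ('s \<Rightarrow> 's \<Rightarrow> 's) \<Rightarrow> 's \<Rightarrow> 's \<Rightarrow> ('s \<Rightarrow> bool) set" where
  "characters S mul one zero =
     {\<phi>. (\<forall>x. x \<notin> idems S mul \<longrightarrow> \<not> \<phi> x) \<and> \<not> \<phi> zero \<and> \<phi> one \<and>
          (\<forall>e\<in>idems S mul. \<forall>f\<in>idems S mul. \<phi> (mul e f) = (\<phi> e \<and> \<phi> f))}"

definition charU :: "'s set \<Rightarrow> ('s \<Rightarrow> 's \<Rightarrow> 's) \<Rightarrow> 's \<Rightarrow> 's \<Rightarrow> 's \<Rightarrow> ('s \<Rightarrow> bool) set" where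
  "charU S mul one zero e = {\<phi> \<in> characters S mul one zero. \<phi> e}"

definition char_top :: "'s set \<Rightarrow> ('s \<Rightarrow> 's \<Rightarrow> 's) \<Rightarrow> 's \<Rightarrow> 's \<Rightarrow> ('s \<Rightarrow> bool) topology" where
  "char_top S mul one zero =
     topology_generated_by {charU S mul one zero e | e. e \<in> idems S mul}"

definition char_act :: "'s set \<Rightarrow> ('s \<Rightarrow> 's \<Rightarrow> 's) \<Rightarrow> ('s \<Rightarrow> 's) \<Rightarrow> 's \<Rightarrow> ('s \<Rightarrow> bool) \<Rightarrow> ('s \<Rightarrow> bool)" where
  "char_act S mul star s \<phi> = (\<lambda>e. e \<in> idems S mul \<and> \<phi> (mul (mul (star s) e) s))"

definition germ_pairs :: "'s set \<Rightarrow> ('s \<Rightarrow> 's \<Rightarrow> 's) \<Rightarrow> ('s \<Rightarrow> 's) \<Rightarrow> 's \<Rightarrow> 's \<Rightarrow> ('s \<times> ('s \<Rightarrow> bool)) set" where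
  "germ_pairs S mul star one zero =
     {(s, \<phi>). s \<in> S \<and> \<phi> \<in> charU S mul one zero (mul (star s) s)}"

definition germ_rel :: "'s set \<Rightarrow> ('s \<Rightarrow> 's \<Rightarrow> 's) \<Rightarrow> ('s \<Rightarrow> 's) \<Rightarrow> 's \<Rightarrow> 's \<Rightarrow>
     (('s \<times> ('s \<Rightarrow> bool)) \<times> ('s \<times> ('s \<Rightarrow> bool))) set" where
  "germ_rel S mul star one zero =
     {((s, \<phi>), (t, \<psi>)). (s, \<phi>) \<in> germ_pairs S mul star one zero \<and>
        (t, \<psi>) \<in> germ_pairs S mul star one zero \<and> \<phi> = \<psi> \<and>
        (\<exists>e\<in>idems S mul. \<phi> e \<and> mul s e = mul t e)}"

definition germ :: "'s set \<Rightarrow> ('s \<Rightarrow> 's \<Rightarrow> 's) \<Rightarrow> ('s \<Rightarrow> 's) \<Rightarrow> 's \<Rightarrow> 's \<Rightarrow>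
     's \<Rightarrow> ('s \<Rightarrow> bool) \<Rightarrow> ('s \<times> ('s \<Rightarrow> bool)) set" where
  "germ S mul star one zero s \<phi> = germ_rel S mul star one zero `` {(s, \<phi>)}"

definition germ_groupoid :: "'s set \<Rightarrow> ('s \<Rightarrow> 's \<Rightarrow> 's) \<Rightarrow> ('s \<Rightarrow> 's) \<Rightarrow> 's \<Rightarrow> 's \<Rightarrow>
     ('s \<Rightarrow> bool, ('s \<times> ('s \<Rightarrow> bool)) set) tgpd" where
  "germ_groupoid S mul star one zero =
    (let gm = germ S mul star one zero;
         act = char_act S mul star;
         rep = (\<lambda>A. SOME p. p \<in> A)
     in \<lparr> obj_top = char_top S mul one zero,
        arr_top = topology_generated_by
           {{gm s \<phi> | \<phi>. \<phi> \<in> U} | s U. s \<in> S \<and>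
               openin (char_top S mul one zero) U \<and> U \<subseteq> charU S mul one zero (mul (star s) s)},
        src = (\<lambda>A. snd (rep A)),
        rng = (\<lambda>A. act (fst (rep A)) (snd (rep A))),
        comp = (\<lambda>A B. gm (mul (fst (rep A)) (fst (rep B))) (snd (rep B))),
        ginv = (\<lambda>A. gm (star (fst (rep A))) (act (fst (rep A)) (snd (rep A)))),
        ident = (\<lambda>\<phi>. gm one \<phi>) \<rparr>)"

definition restrict_gpd :: "('o, 'a) tgpd \<Rightarrow> 'o set \<Rightarrow> ('o, 'a) tgpd" where
  "restrict_gpd G X = G\<lparr> obj_top := subtopology (obj_top G) X,
       arr_top := subtopology (arr_top G) {g \<in> arrs G. src G g \<in> X} \<rparr>"

definition gpd_iso :: "('o1, 'a1) tgpd \<Rightarrow> ('o2, 'a2) tgpd \<Rightarrow> bool" where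
  "gpd_iso G H \<longleftrightarrow> (\<exists>fo fa.
     homeomorphic_map (obj_top G) (obj_top H) fo \<and>
     homeomorphic_map (arr_top G) (arr_top H) fa \<and>
     (\<forall>g\<in>arrs G. src H (fa g) = fo (src G g) \<and> rng H (fa g) = fo (rng G g) \<and>
                  ginv H (fa g) = fa (ginv G g)) \<and>
     (\<forall>x\<in>objs G. ident H (fo x) = fa (ident G x)) \<and>
     (\<forall>(g, h)\<in>composable G. comp H (fa g) (fa h) = fa (comp G g h)))"

abbreviation BisE :: "('o, 'a) tgpd \<Rightarrow> 'a set set" where
  "BisE G \<equiv> idems (Bis G) (bis_mult G)"

definition irreducible_idem :: "('o, 'a) tgpd \<Rightarrow> 'a set \<Rightarrow> bool" where
  "irreducible_idem G e \<longleftrightarrow> e \<in> BisE G \<and> e \<noteq> bis_one G \<and>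
     (\<forall>e1\<in>BisE G. \<forall>e2\<in>BisE G. e = bis_mult G e1 e2 \<longrightarrow> e1 = e \<or> e2 = e)"

text \<open>\<phi>_e(f) = 0 iff f \<le> e (for f \<in> E; normalised to False outside E).\<close>
definition phi_irr :: "('o, 'a) tgpd \<Rightarrow> 'a set \<Rightarrow> 'a set \<Rightarrow> bool" where
  "phi_irr G e = (\<lambda>f. f \<in> BisE G \<and> \<not> f \<subseteq> e)"

definition S_invariant :: "'s set \<Rightarrow> ('s \<Rightarrow> 's \<Rightarrow> 's) \<Rightarrow> ('s \<Rightarrow> 's) \<Rightarrow> 's \<Rightarrow> 's \<Rightarrow>
     ('s \<Rightarrow> bool) set \<Rightarrow> bool" where
  "S_invariant S mul star one zero X \<longleftrightarrow>
     (\<forall>s\<in>S. \<forall>\<phi>\<in>X. \<phi> \<in> charU S mul one zero (mul (star s) s) \<longrightarrow> char_act S mul star s \<phi> \<in> X)"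

end

theory Submission
  imports Defs
begin


locale etg =
  fixes G :: "('o, 'a) tgpd"
  assumes et: "etale G"
begin

abbreviation "sr \<equiv> src G"
abbreviation "rg \<equiv> rng G"
abbreviation "cp \<equiv> comp G"
abbreviation "iv \<equiv> ginv G"
abbreviation "idt \<equiv> ident G"
abbreviation "OT \<equiv> obj_top G"
abbreviation "AT \<equiv> arr_top G"

lemma tg: "topological_groupoid G" using et etale_def by blast

lemma sr_in: "g \<in> arrs G \<Longrightarrow> sr g \<in> objs G" using tg unfolding topological_groupoid_def by blast
lemma rg_in: "g \<in> arrs G \<Longrightarrow> rg g \<in> objs G" using tg unfolding topological_groupoid_def by blast
lemma iv_in: "g \<in> arrs G \<Longrightarrow> iv g \<in> arrs G" using tg unfolding topological_groupoid_def by blast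
lemma idt_in: "x \<in> objs G \<Longrightarrow> idt x \<in> arrs G" using tg unfolding topological_groupoid_def by blast
lemma sr_idt[simp]: "x \<in> objs G \<Longrightarrow> sr (idt x) = x" using tg unfolding topological_groupoid_def by blast
lemma rg_idt[simp]: "x \<in> objs G \<Longrightarrow> rg (idt x) = x" using tg unfolding topological_groupoid_def by blast
lemma cp_in: "g \<in> arrs G \<Longrightarrow> h \<in> arrs G \<Longrightarrow> sr g = rg h \<Longrightarrow> cp g h \<in> arrs G"
  using tg unfolding topological_groupoid_def composable_def by blast
lemma sr_cp[simp]: "g \<in> arrs G \<Longrightarrow> h \<in> arrs G \<Longrightarrow> sr g = rg h \<Longrightarrow> sr (cp g h) = sr h"
  using tg unfolding topological_groupoid_def composable_def by blast
lemma rg_cp[simp]: "g \<in> arrs G \<Longrightarrow> h \<in> arrs G \<Longrightarrow> sr g = rg h \<Longrightarrow> rg (cp g h) = rg g"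
  using tg unfolding topological_groupoid_def composable_def by blast
lemma assoc: "g \<in> arrs G \<Longrightarrow> h \<in> arrs G \<Longrightarrow> k \<in> arrs G \<Longrightarrow> sr g = rg h \<Longrightarrow> sr h = rg k \<Longrightarrow>
   cp (cp g h) k = cp g (cp h k)"
  using tg unfolding topological_groupoid_def by blast
lemma idl[simp]: "g \<in> arrs G \<Longrightarrow> cp (idt (rg g)) g = g" using tg unfolding topological_groupoid_def by blast
lemma idr[simp]: "g \<in> arrs G \<Longrightarrow> cp g (idt (sr g)) = g" using tg unfolding topological_groupoid_def by blast
lemma sr_iv[simp]: "g \<in> arrs G \<Longrightarrow> sr (iv g) = rg g" using tg unfolding topological_groupoid_def by blast
lemma rg_iv[simp]: "g \<in> arrs G \<Longrightarrow> rg (iv g) = sr g" using tg unfolding topological_groupoid_def by blast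
lemma inv_r[simp]: "g \<in> arrs G \<Longrightarrow> cp g (iv g) = idt (rg g)" using tg unfolding topological_groupoid_def by blast
lemma inv_l[simp]: "g \<in> arrs G \<Longrightarrow> cp (iv g) g = idt (sr g)" using tg unfolding topological_groupoid_def by blast
lemma c_sr: "continuous_map AT OT sr" using tg unfolding topological_groupoid_def by blast
lemma c_rg: "continuous_map AT OT rg" using tg unfolding topological_groupoid_def by blast
lemma c_iv: "continuous_map AT AT iv" using tg unfolding topological_groupoid_def by blast
lemma c_idt: "continuous_map OT AT idt" using tg unfolding topological_groupoid_def by blast
lemma c_cp: "continuous_map (subtopology (prod_topology AT AT) (composable G)) AT (\<lambda>(g, h). cp g h)"
  using tg unfolding topological_groupoid_def by blast

lemma iv_iv[simp]: assumes g: "g \<in> arrs G" shows "iv (iv g) = g"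
proof -
  define k where "k = iv g"
  have k: "k \<in> arrs G" "iv k \<in> arrs G" using g iv_in k_def by auto
  have r1: "rg (iv k) = rg g" using k g k_def by simp
  have "iv k = cp (idt (rg (iv k))) (iv k)" using idl[OF k(2)] by simp
  also have "\<dots> = cp (cp g k) (iv k)" using r1 inv_r[OF g] k_def by simp
  also have "\<dots> = cp g (cp k (iv k))" using assoc[OF g k(1) k(2)] g k k_def by simp
  also have "\<dots> = cp g (idt (sr g))" using inv_r[OF k(1)] g k_def by simp
  also have "\<dots> = g" using idr[OF g] .
  finally show ?thesis using k_def by simp
qed

lemma cancel_l: assumes "g \<in> arrs G" "h \<in> arrs G" "h' \<in> arrs G" "sr g = rg h" "sr g = rg h'"
   "cp g h = cp g h'" shows "h = h'"
proof -
  have ig: "iv g \<in> arrs G" "sr (iv g) = rg g" using assms iv_in by auto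
  have "h = cp (idt (sr g)) h" using idl[OF assms(2)] assms(4) by simp
  also have "\<dots> = cp (cp (iv g) g) h" using inv_l[OF assms(1)] by simp
  also have "\<dots> = cp (iv g) (cp g h)" using assoc[OF ig(1) assms(1) assms(2)] ig assms by simp
  also have "\<dots> = cp (iv g) (cp g h')" using assms by simp
  also have "\<dots> = cp (cp (iv g) g) h'" using assoc[OF ig(1) assms(1) assms(3)] ig assms by (simp del: inv_l)
  also have "\<dots> = cp (idt (sr g)) h'" using inv_l[OF assms(1)] by simp
  also have "\<dots> = h'" using idl[OF assms(3)] assms(5) by simp
  finally show ?thesis .
qed

lemma iv_inj: assumes "g \<in> arrs G" "h \<in> arrs G" "iv g = iv h" shows "g = h"
  using iv_iv[OF assms(1)] iv_iv[OF assms(2)] assms(3) by metis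

lemma bis_open: "bisection G B \<Longrightarrow> openin AT B" by (simp add: bisection_def)

lemma sr_open: assumes "openin AT V" shows "openin OT (sr ` V)"
proof -
  have "sr ` V = (\<Union>B\<in>{B. bisection G B}. sr ` (B \<inter> V))"
  proof
    show "sr ` V \<subseteq> (\<Union>B\<in>{B. bisection G B}. sr ` (B \<inter> V))"
    proof
      fix x assume "x \<in> sr ` V"
      then obtain g where g: "g \<in> V" "x = sr g" by auto
      then have "g \<in> arrs G" using assms openin_subset by blast
      then obtain B where "bisection G B" "g \<in> B" using et unfolding etale_def by blast
      then show "x \<in> (\<Union>B\<in>{B. bisection G B}. sr ` (B \<inter> V))" using g by blast
    qed
  qed blast
  moreover have "openin OT (sr ` (B \<inter> V))" if "bisection G B" for B
  proof -
    have "openin (subtopology AT B) (B \<inter> V)" using assms openin_subtopology_Int2 by (metis inf_commute)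
    then show ?thesis using that unfolding bisection_def open_map_def by blast
  qed
  ultimately show ?thesis by auto
qed

lemma rg_open: assumes "openin AT V" shows "openin OT (rg ` V)"
proof -
  have "rg ` V = (\<Union>B\<in>{B. bisection G B}. rg ` (B \<inter> V))"
  proof
    show "rg ` V \<subseteq> (\<Union>B\<in>{B. bisection G B}. rg ` (B \<inter> V))"
    proof
      fix x assume "x \<in> rg ` V"
      then obtain g where g: "g \<in> V" "x = rg g" by auto
      then have "g \<in> arrs G" using assms openin_subset by blast
      then obtain B where "bisection G B" "g \<in> B" using et unfolding etale_def by blast
      then show "x \<in> (\<Union>B\<in>{B. bisection G B}. rg ` (B \<inter> V))" using g by blast
    qed
  qed blast
  moreover have "openin OT (rg ` (B \<inter> V))" if "bisection G B" for B
  proof -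
    have "openin (subtopology AT B) (B \<inter> V)" using assms openin_subtopology_Int2 by (metis inf_commute)
    then show ?thesis using that unfolding bisection_def open_map_def by blast
  qed
  ultimately show ?thesis by auto
qed

lemma bisection_iff: "bisection G B \<longleftrightarrow> openin AT B \<and> inj_on sr B \<and> inj_on rg B"
proof
  assume "openin AT B \<and> inj_on sr B \<and> inj_on rg B"
  moreover have "openin AT U" if "openin (subtopology AT B) U" for U
    using that calculation openin_trans_full by blast
  ultimately show "bisection G B" unfolding bisection_def open_map_def using sr_open rg_open by blast
qed (simp add: bisection_def)

lemma bis_sub: "bisection G B \<Longrightarrow> g \<in> B \<Longrightarrow> g \<in> arrs G"
  using bis_open openin_subset by blast

lemma bis_open_sub: "bisection G B \<Longrightarrow> openin AT V \<Longrightarrow> V \<subseteq> B \<Longrightarrow> bisection G V"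
  by (meson bisection_iff inj_on_subset)

end


context etg begin

lemma idt_inj: "x \<in> objs G \<Longrightarrow> y \<in> objs G \<Longrightarrow> idt x = idt y \<Longrightarrow> x = y"
  by (metis sr_idt)

lemma units_open: "openin AT (idt ` objs G)"
proof (subst openin_subopen, intro ballI)
  fix u assume "u \<in> idt ` objs G"
  then obtain x where x: "x \<in> objs G" "u = idt x" by auto
  then have "u \<in> arrs G" using idt_in by auto
  then obtain B where B: "bisection G B" "u \<in> B" using et unfolding etale_def by blast
  define W where "W = B \<inter> {g \<in> topspace AT. (idt \<circ> sr) g \<in> B}"
  have "openin AT W" unfolding W_def
    using bis_open[OF B(1)] openin_continuous_map_preimage[OF continuous_map_compose[OF c_sr c_idt] bis_open[OF B(1)]]
    by blast
  moreover have "u \<in> W" using x B \<open>u \<in> arrs G\<close> unfolding W_def by simp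
  moreover have "W \<subseteq> idt ` objs G"
  proof
    fix g assume g: "g \<in> W"
    then have ga: "g \<in> arrs G" "g \<in> B" "idt (sr g) \<in> B" unfolding W_def by auto
    have "sr (idt (sr g)) = sr g" using ga sr_in by simp
    moreover have "inj_on sr B" using B(1) bisection_iff by blast
    ultimately have "idt (sr g) = g" using inj_onD[of sr B "idt (sr g)" g] ga by blast
    then have "g = idt (sr g)" by simp
    then show "g \<in> idt ` objs G" using ga sr_in by blast
  qed
  ultimately show "\<exists>T. openin AT T \<and> u \<in> T \<and> T \<subseteq> idt ` objs G" by blast
qed

lemma idt_img_eq: assumes "W \<subseteq> objs G" shows "idt ` W = idt ` objs G \<inter> {g \<in> topspace AT. sr g \<in> W}"
proof (intro equalityI subsetI)
  fix g assume "g \<in> idt ` W"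
  then obtain x where "x \<in> W" "g = idt x" by blast
  then show "g \<in> idt ` objs G \<inter> {g \<in> topspace AT. sr g \<in> W}" using assms idt_in by auto
next
  fix g assume "g \<in> idt ` objs G \<inter> {g \<in> topspace AT. sr g \<in> W}"
  then obtain x where "x \<in> objs G" "g = idt x" "sr g \<in> W" by blast
  then show "g \<in> idt ` W" by simp
qed

lemma idt_open: assumes "openin OT W" shows "openin AT (idt ` W)"
proof -
  have "W \<subseteq> objs G" using assms openin_subset by blast
  then have "idt ` W = idt ` objs G \<inter> {g \<in> topspace AT. sr g \<in> W}" by (rule idt_img_eq)
  then show ?thesis using units_open openin_continuous_map_preimage[OF c_sr assms] by (metis openin_Int)
qed

lemma idt_bis: assumes "openin OT W" shows "bisection G (idt ` W)"
proof -
  have W: "W \<subseteq> objs G" using assms openin_subset by blast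
  have "inj_on sr (idt ` W)" "inj_on rg (idt ` W)" using W unfolding inj_on_def by (auto simp: subset_iff)
  then show ?thesis using idt_open[OF assms] bisection_iff by blast
qed

lemma mult_units: assumes "V \<subseteq> objs G" "W \<subseteq> objs G"
  shows "bis_mult G (idt ` V) (idt ` W) = idt ` (V \<inter> W)"
proof (intro equalityI subsetI)
  have cc: "cp (idt x) (idt x) = idt x" if "x \<in> objs G" for x
    using idl[OF idt_in[OF that]] that by simp
  fix g assume "g \<in> bis_mult G (idt ` V) (idt ` W)"
  then obtain x y where "x \<in> V" "y \<in> W" "sr (idt x) = rg (idt y)" "g = cp (idt x) (idt y)"
    unfolding bis_mult_def by blast
  moreover have "x \<in> objs G" "y \<in> objs G" using calculation assms by auto
  ultimately show "g \<in> idt ` (V \<inter> W)" using cc by auto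
next
  have cc: "cp (idt x) (idt x) = idt x" if "x \<in> objs G" for x
    using idl[OF idt_in[OF that]] that by simp
  fix g assume "g \<in> idt ` (V \<inter> W)"
  then obtain x where x: "x \<in> V" "x \<in> W" "g = idt x" by blast
  then have "x \<in> objs G" using assms by auto
  then have "g = cp (idt x) (idt x) \<and> idt x \<in> idt ` V \<and> idt x \<in> idt ` W \<and> sr (idt x) = rg (idt x)"
    using x cc by auto
  then show "g \<in> bis_mult G (idt ` V) (idt ` W)" unfolding bis_mult_def by blast
qed

lemma bis_one_eq: "bis_one G = idt ` objs G" by (simp add: bis_one_def)

lemma BisE_iff: "e \<in> BisE G \<longleftrightarrow> (\<exists>W. openin OT W \<and> e = idt ` W)"
proof
  assume e: "e \<in> BisE G"
  then have B: "bisection G e" and m: "bis_mult G e e = e" unfolding idems_def Bis_def by auto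
  have isr: "inj_on sr e" and irr: "inj_on rg e" using B bisection_iff by auto
  have u: "g = idt (sr g)" if "g \<in> e" for g
  proof -
    have g: "g \<in> arrs G" using B that bis_sub by blast
    have "g \<in> bis_mult G e e" using m that by simp
    then obtain a b where ab: "a \<in> e" "b \<in> e" "sr a = rg b" "g = cp a b"
      unfolding bis_mult_def by blast
    have abA: "a \<in> arrs G" "b \<in> arrs G" using ab B bis_sub by auto
    have "sr g = sr b" using ab abA by simp
    then have gb: "g = b" by (rule inj_onD[OF isr _ that ab(2)])
    have "rg g = rg a" using ab abA by simp
    then have ga: "g = a" by (rule inj_onD[OF irr _ that ab(1)])
    have gg: "cp g g = g" using ab(4)[folded ga gb] by (rule sym)
    have sg: "sr g = rg g" using ab(3)[folded ga gb] .
    have ig: "iv g \<in> arrs G" "sr (iv g) = rg g" using g iv_in by auto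
    have "idt (sr g) = cp (iv g) g" using inv_l[OF g] by simp
    also have "\<dots> = cp (iv g) (cp g g)" using gg by simp
    also have "\<dots> = cp (cp (iv g) g) g" using assoc[OF ig(1) g g] ig sg g by (simp del: inv_l)
    also have "\<dots> = g" using inv_l[OF g] sg idl[OF g] by simp
    finally show ?thesis by (rule sym)
  qed
  have "e = idt ` (sr ` e)"
  proof (intro equalityI subsetI)
    fix g assume g: "g \<in> e"
    have "sr g \<in> sr ` e" using g by (rule imageI)
    then show "g \<in> idt ` (sr ` e)" by (rule image_eqI[where f=idt, OF u[OF g]])
  next
    fix g assume "g \<in> idt ` (sr ` e)"
    then obtain h where h: "h \<in> e" "g = idt (sr h)" by blast
    have "idt (sr h) = h" using u[OF h(1)] by (rule sym)
    then show "g \<in> e" using h by simp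
  qed
  moreover have "openin OT (sr ` e)" using sr_open bis_open[OF B] by blast
  ultimately show "\<exists>W. openin OT W \<and> e = idt ` W" by blast
next
  assume "\<exists>W. openin OT W \<and> e = idt ` W"
  then obtain W where W: "openin OT W" "e = idt ` W" by blast
  have "W \<subseteq> objs G" using W openin_subset by blast
  then have "bis_mult G e e = e" using W mult_units[of W W] by simp
  moreover have "e \<in> Bis G" using W idt_bis unfolding Bis_def by simp
  ultimately show "e \<in> BisE G" unfolding idems_def by simp
qed

lemma one_BisE: "bis_one G \<in> BisE G"
  unfolding BisE_iff bis_one_eq by (rule exI[of _ "objs G"]) simp

lemma BisE_sub: assumes "e \<in> BisE G" shows "e \<subseteq> idt ` objs G"
proof -
  obtain W where W: "openin OT W" "e = idt ` W" using assms BisE_iff by blast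
  then have "W \<subseteq> objs G" by (simp add: openin_subset)
  then show ?thesis using W by blast
qed

lemma zero_BisE: "bis_zero \<in> BisE G"
  unfolding BisE_iff bis_zero_def by (rule exI[of _ "{}"]) simp

definition sec :: "'a set \<Rightarrow> 'o \<Rightarrow> 'a" where
  "sec B x = (THE g. g \<in> B \<and> sr g = x)"

lemma sec_eq: assumes "bisection G B" "g \<in> B" shows "sec B (sr g) = g"
  unfolding sec_def
proof (rule the_equality)
  have "inj_on sr B" using assms(1) bisection_iff by blast
  then show "\<And>h. h \<in> B \<and> sr h = sr g \<Longrightarrow> h = g" using assms(2) by (meson inj_onD)
qed (use assms in auto)

lemma sec_in: assumes "bisection G B" "x \<in> sr ` B" shows "sec B x \<in> B" "sr (sec B x) = x"
  using assms sec_eq by auto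

lemma sec_cont: assumes "bisection G B" shows "continuous_map (subtopology OT (sr ` B)) AT (sec B)"
  unfolding continuous_map_def
proof (intro conjI allI impI)
  show "sec B \<in> topspace (subtopology OT (sr ` B)) \<rightarrow> topspace AT"
    using sec_in[OF assms] bis_sub[OF assms] by auto
  fix U assume U: "openin AT U"
  have "{x \<in> topspace (subtopology OT (sr ` B)). sec B x \<in> U} = sr ` (B \<inter> U) \<inter> sr ` B"
  proof (intro equalityI subsetI)
    fix x assume "x \<in> {x \<in> topspace (subtopology OT (sr ` B)). sec B x \<in> U}"
    then have "x \<in> sr ` B" "sec B x \<in> U" by auto
    then show "x \<in> sr ` (B \<inter> U) \<inter> sr ` B" using sec_in[OF assms] by (metis IntI image_eqI)
  next
    fix x assume "x \<in> sr ` (B \<inter> U) \<inter> sr ` B"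
    then obtain g where "g \<in> B" "g \<in> U" "x = sr g" by blast
    then show "x \<in> {x \<in> topspace (subtopology OT (sr ` B)). sec B x \<in> U}"
      using sec_eq[OF assms] bis_sub[OF assms] sr_in by auto
  qed
  moreover have "openin OT (sr ` (B \<inter> U))" using sr_open U bis_open[OF assms] by blast
  ultimately show "openin (subtopology OT (sr ` B)) {x \<in> topspace (subtopology OT (sr ` B)). sec B x \<in> U}"
    using openin_subtopology by metis
qed

end


context etg begin

lemma mult_mem: "k \<in> bis_mult G s t \<longleftrightarrow> (\<exists>g h. g \<in> s \<and> h \<in> t \<and> sr g = rg h \<and> k = cp g h)"
  unfolding bis_mult_def by blast

lemma prod_open: assumes s: "bisection G s" and t: "bisection G t"
  shows "openin AT (bis_mult G s t)"
proof -
  define Od where "Od = {k \<in> topspace AT. sr k \<in> sr ` t}"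
  have Oo: "openin AT Od" unfolding Od_def
    by (rule openin_continuous_map_preimage[OF c_sr sr_open[OF bis_open[OF t]]])
  define \<Phi> where "\<Phi> = (\<lambda>k. cp k (iv (sec t (sr k))))"
  have c1: "continuous_map (subtopology AT Od) (subtopology OT (sr ` t)) sr"
    unfolding continuous_map_in_subtopology using continuous_map_from_subtopology[OF c_sr] Od_def by auto
  have c2: "continuous_map (subtopology AT Od) AT (\<lambda>k. iv (sec t (sr k)))"
    using continuous_map_compose[OF continuous_map_compose[OF c1 sec_cont[OF t]] c_iv] by (simp add: o_def)
  have c3: "continuous_map (subtopology AT Od) (subtopology (prod_topology AT AT) (composable G))
      (\<lambda>k. (k, iv (sec t (sr k))))"
    unfolding continuous_map_in_subtopology
  proof
    have "continuous_map (subtopology AT Od) AT (\<lambda>k. k)"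
      using continuous_map_from_subtopology[OF continuous_map_id] by (simp add: id_def)
    then show "continuous_map (subtopology AT Od) (prod_topology AT AT) (\<lambda>k. (k, iv (sec t (sr k))))"
      using c2 by (rule continuous_map_pairedI)
    show "(\<lambda>k. (k, iv (sec t (sr k)))) \<in> topspace (subtopology AT Od) \<rightarrow> composable G"
    proof
      fix k assume "k \<in> topspace (subtopology AT Od)"
      then have k: "k \<in> arrs G" "sr k \<in> sr ` t" unfolding Od_def by auto
      have h: "sec t (sr k) \<in> t" "sr (sec t (sr k)) = sr k" using sec_in[OF t k(2)] by auto
      have ha: "sec t (sr k) \<in> arrs G" using bis_sub[OF t h(1)] .
      show "(k, iv (sec t (sr k))) \<in> composable G" unfolding composable_def using k h ha iv_in by simp
    qed
  qed
  have c\<Phi>: "continuous_map (subtopology AT Od) AT \<Phi>"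
    using continuous_map_compose[OF c3 c_cp] unfolding \<Phi>_def by (simp add: o_def)
  have eq: "bis_mult G s t = {k \<in> topspace (subtopology AT Od). \<Phi> k \<in> s}"
  proof (intro equalityI subsetI)
    fix k assume "k \<in> bis_mult G s t"
    then obtain g h where gh: "g \<in> s" "h \<in> t" "sr g = rg h" "k = cp g h" unfolding mult_mem by blast
    have ga: "g \<in> arrs G" "h \<in> arrs G" using gh s t bis_sub by auto
    have ka: "k \<in> arrs G" "sr k = sr h" using gh ga cp_in by auto
    have sh: "sec t (sr k) = h" using ka sec_eq[OF t gh(2)] by simp
    have "\<Phi> k = cp (cp g h) (iv h)" unfolding \<Phi>_def sh using gh by simp
    also have "\<dots> = cp g (cp h (iv h))" using assoc[OF ga(1) ga(2) iv_in[OF ga(2)]] gh ga by (simp del: inv_r)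
    also have "\<dots> = g" using idr[OF ga(1)] gh(3) inv_r[OF ga(2)] by simp
    finally have "\<Phi> k \<in> s" using gh by simp
    moreover have "k \<in> Od" unfolding Od_def using ka gh by auto
    ultimately show "k \<in> {k \<in> topspace (subtopology AT Od). \<Phi> k \<in> s}" using ka by simp
  next
    fix k assume "k \<in> {k \<in> topspace (subtopology AT Od). \<Phi> k \<in> s}"
    then have k: "k \<in> arrs G" "sr k \<in> sr ` t" "\<Phi> k \<in> s" unfolding Od_def by auto
    define h where "h = sec t (sr k)"
    have h: "h \<in> t" "sr h = sr k" using sec_in[OF t k(2)] h_def by auto
    have ha: "h \<in> arrs G" "iv h \<in> arrs G" using bis_sub[OF t h(1)] iv_in by auto
    define g where "g = cp k (iv h)"
    have gs: "g \<in> s" using k(3) unfolding g_def h_def \<Phi>_def .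
    have sg: "sr g = rg h" unfolding g_def using k ha h by simp
    have "cp g h = cp k (cp (iv h) h)" unfolding g_def using assoc[OF k(1) ha(2) ha(1)] k ha h by (simp del: inv_l)
    also have "\<dots> = k" using k ha h by simp
    finally have "k = cp g h" by (rule sym)
    then show "k \<in> bis_mult G s t" unfolding mult_mem using gs h sg by blast
  qed
  have "openin (subtopology AT Od) {k \<in> topspace (subtopology AT Od). \<Phi> k \<in> s}"
    by (rule openin_continuous_map_preimage[OF c\<Phi> bis_open[OF s]])
  then have "openin AT {k \<in> topspace (subtopology AT Od). \<Phi> k \<in> s}" using Oo by (rule openin_trans_full)
  then show ?thesis using eq by simp
qed

lemma prod_bis: assumes s: "bisection G s" and t: "bisection G t"
  shows "bisection G (bis_mult G s t)"
proof -
  have iss: "inj_on sr s" "inj_on rg s" and it: "inj_on sr t" "inj_on rg t" using s t bisection_iff by auto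
  have "inj_on sr (bis_mult G s t)"
  proof (rule inj_onI)
    fix k1 k2 assume k: "k1 \<in> bis_mult G s t" "k2 \<in> bis_mult G s t" "sr k1 = sr k2"
    obtain g1 h1 where 1: "g1 \<in> s" "h1 \<in> t" "sr g1 = rg h1" "k1 = cp g1 h1" using k(1) unfolding mult_mem by blast
    obtain g2 h2 where 2: "g2 \<in> s" "h2 \<in> t" "sr g2 = rg h2" "k2 = cp g2 h2" using k(2) unfolding mult_mem by blast
    have a: "g1 \<in> arrs G" "h1 \<in> arrs G" "g2 \<in> arrs G" "h2 \<in> arrs G" using 1 2 s t bis_sub by auto
    have "sr h1 = sr h2" using k(3) 1 2 a by simp
    then have hh: "h1 = h2" by (rule inj_onD[OF it(1) _ 1(2) 2(2)])
    have "sr g1 = sr g2" using 1 2 hh by simp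
    then have "g1 = g2" by (rule inj_onD[OF iss(1) _ 1(1) 2(1)])
    then show "k1 = k2" using hh 1 2 by simp
  qed
  moreover have "inj_on rg (bis_mult G s t)"
  proof (rule inj_onI)
    fix k1 k2 assume k: "k1 \<in> bis_mult G s t" "k2 \<in> bis_mult G s t" "rg k1 = rg k2"
    obtain g1 h1 where 1: "g1 \<in> s" "h1 \<in> t" "sr g1 = rg h1" "k1 = cp g1 h1" using k(1) unfolding mult_mem by blast
    obtain g2 h2 where 2: "g2 \<in> s" "h2 \<in> t" "sr g2 = rg h2" "k2 = cp g2 h2" using k(2) unfolding mult_mem by blast
    have a: "g1 \<in> arrs G" "h1 \<in> arrs G" "g2 \<in> arrs G" "h2 \<in> arrs G" using 1 2 s t bis_sub by auto
    have "rg g1 = rg g2" using k(3) 1 2 a by simp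
    then have gg: "g1 = g2" by (rule inj_onD[OF iss(2) _ 1(1) 2(1)])
    have "rg h1 = rg h2" using 1 2 gg by simp
    then have "h1 = h2" by (rule inj_onD[OF it(2) _ 1(2) 2(2)])
    then show "k1 = k2" using gg 1 2 by simp
  qed
  ultimately show ?thesis using prod_open[OF s t] bisection_iff by blast
qed

lemma star_eq: assumes s: "bisection G s" shows "bis_star G s = {g \<in> topspace AT. iv g \<in> s}"
proof (intro equalityI subsetI)
  fix g assume "g \<in> bis_star G s"
  then obtain a where a: "a \<in> s" "g = iv a" unfolding bis_star_def by blast
  have "a \<in> arrs G" using bis_sub[OF s a(1)] .
  then show "g \<in> {g \<in> topspace AT. iv g \<in> s}" using a iv_in by simp
next
  fix g assume g: "g \<in> {g \<in> topspace AT. iv g \<in> s}"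
  then have "g = iv (iv g)" by simp
  then show "g \<in> bis_star G s" unfolding bis_star_def using g by blast
qed

lemma star_bis: assumes s: "bisection G s" shows "bisection G (bis_star G s)"
proof -
  have iss: "inj_on sr s" "inj_on rg s" using s bisection_iff by auto
  have "openin AT (bis_star G s)" unfolding star_eq[OF s]
    by (rule openin_continuous_map_preimage[OF c_iv bis_open[OF s]])
  moreover have "inj_on sr (bis_star G s)"
  proof (rule inj_onI)
    fix x y assume "x \<in> bis_star G s" "y \<in> bis_star G s" "sr x = sr y"
    then obtain a b where ab: "a \<in> s" "b \<in> s" "x = iv a" "y = iv b" "sr (iv a) = sr (iv b)"
      unfolding bis_star_def by blast
    have "rg a = rg b" using ab bis_sub[OF s] by (metis sr_iv)
    then have "a = b" by (rule inj_onD[OF iss(2) _ ab(1) ab(2)])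
    then show "x = y" using ab by simp
  qed
  moreover have "inj_on rg (bis_star G s)"
  proof (rule inj_onI)
    fix x y assume "x \<in> bis_star G s" "y \<in> bis_star G s" "rg x = rg y"
    then obtain a b where ab: "a \<in> s" "b \<in> s" "x = iv a" "y = iv b" "rg (iv a) = rg (iv b)"
      unfolding bis_star_def by blast
    have "sr a = sr b" using ab bis_sub[OF s] by (metis rg_iv)
    then have "a = b" by (rule inj_onD[OF iss(1) _ ab(1) ab(2)])
    then show "x = y" using ab by simp
  qed
  ultimately show ?thesis using bisection_iff by blast
qed

lemma sec_mult: assumes s: "bisection G s" and t: "bisection G t"
  and x: "x \<in> sr ` t" and y: "rg (sec t x) \<in> sr ` s"
  shows "x \<in> sr ` bis_mult G s t" "sec (bis_mult G s t) x = cp (sec s (rg (sec t x))) (sec t x)"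
proof -
  define h where "h = sec t x"
  define g where "g = sec s (rg h)"
  have h: "h \<in> t" "sr h = x" using sec_in[OF t x] h_def by auto
  have g: "g \<in> s" "sr g = rg h" using sec_in[OF s y] g_def h_def by auto
  have a: "g \<in> arrs G" "h \<in> arrs G" using g h s t bis_sub by auto
  have k: "cp g h \<in> bis_mult G s t" unfolding mult_mem using g h by blast
  have sk: "sr (cp g h) = x" using a g h by simp
  then show "x \<in> sr ` bis_mult G s t" using k by blast
  show "sec (bis_mult G s t) x = cp (sec s (rg (sec t x))) (sec t x)"
    using sec_eq[OF prod_bis[OF s t] k] sk g_def h_def by simp
qed

lemma sr_mult: assumes s: "bisection G s" and t: "bisection G t"
  and x: "x \<in> sr ` bis_mult G s t"
  shows "x \<in> sr ` t" "rg (sec t x) \<in> sr ` s"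
proof -
  obtain k where k: "k \<in> bis_mult G s t" "x = sr k" using x by blast
  then obtain g h where gh: "g \<in> s" "h \<in> t" "sr g = rg h" "k = cp g h" unfolding mult_mem by blast
  have a: "g \<in> arrs G" "h \<in> arrs G" using gh s t bis_sub by auto
  have xh: "x = sr h" using k gh a by simp
  then show "x \<in> sr ` t" using gh by blast
  have "sec t x = h" using sec_eq[OF t gh(2)] xh by simp
  then show "rg (sec t x) \<in> sr ` s" using gh by (metis imageI)
qed

lemma sec_star: assumes s: "bisection G s" and a: "a \<in> s"
  shows "rg a \<in> sr ` bis_star G s" "sec (bis_star G s) (rg a) = iv a"
proof -
  have aa: "a \<in> arrs G" using bis_sub[OF s a] .
  have m: "iv a \<in> bis_star G s" unfolding bis_star_def using a by blast
  have "sr (iv a) = rg a" using aa by simp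
  then show "rg a \<in> sr ` bis_star G s" using m by (metis imageI)
  show "sec (bis_star G s) (rg a) = iv a" using sec_eq[OF star_bis[OF s] m] aa by simp
qed

end


context etg begin

lemma inj_idt: "inj_on idt (objs G)" unfolding inj_on_def using idt_inj by blast

lemma idt_img_inj: "V \<subseteq> objs G \<Longrightarrow> W \<subseteq> objs G \<Longrightarrow> idt ` V = idt ` W \<Longrightarrow> V = W"
  using inj_on_image_eq_iff[OF inj_idt] by blast

lemma idt_img_sub: assumes "V \<subseteq> objs G" "W \<subseteq> objs G" "idt ` V \<subseteq> idt ` W" shows "V \<subseteq> W"
proof
  fix x assume "x \<in> V"
  then have "idt x \<in> idt ` W" using assms by blast
  then show "x \<in> W" using inj_on_image_mem_iff[OF inj_idt] assms \<open>x \<in> V\<close> by blast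
qed

lemma sr_idt_img: assumes "W \<subseteq> objs G" shows "sr ` idt ` W = W"
proof -
  have "sr ` idt ` W = (\<lambda>x. sr (idt x)) ` W" by (simp add: image_image)
  also have "\<dots> = (\<lambda>x. x) ` W" using assms by (intro image_cong) auto
  finally show ?thesis by simp
qed

definition ev :: "'o \<Rightarrow> 'a set \<Rightarrow> bool" where
  "ev x = (\<lambda>f. f \<in> BisE G \<and> x \<in> sr ` f)"

lemma ev_idt: assumes "openin OT W" shows "ev x (idt ` W) \<longleftrightarrow> x \<in> W"
proof -
  have "W \<subseteq> objs G" using assms openin_subset by blast
  then show ?thesis unfolding ev_def using sr_idt_img BisE_iff assms by auto
qed

lemma ev_char: assumes x: "x \<in> objs G" shows "ev x \<in> characters (Bis G) (bis_mult G) (bis_one G) bis_zero"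
  unfolding characters_def
proof (intro CollectI conjI allI impI ballI)
  fix y assume "y \<notin> BisE G" then show "\<not> ev x y" unfolding ev_def by simp
next
  show "\<not> ev x bis_zero" unfolding ev_def bis_zero_def by simp
next
  show "ev x (bis_one G)" unfolding bis_one_eq using ev_idt[OF openin_topspace] x by simp
next
  fix e f assume e: "e \<in> BisE G" and f: "f \<in> BisE G"
  obtain V where V: "openin OT V" "e = idt ` V" using e BisE_iff by blast
  obtain W where W: "openin OT W" "f = idt ` W" using f BisE_iff by blast
  have s: "V \<subseteq> objs G" "W \<subseteq> objs G" using V W openin_subset by auto
  have "bis_mult G e f = idt ` (V \<inter> W)" using mult_units[OF s] V W by simp
  moreover have "openin OT (V \<inter> W)" using V W by blast
  ultimately show "ev x (bis_mult G e f) = (ev x e \<and> ev x f)" using ev_idt V W by simp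
qed

abbreviation cl :: "'o \<Rightarrow> 'o set" where "cl x \<equiv> OT closure_of {x}"

definition ex :: "'o \<Rightarrow> 'a set" where "ex x = idt ` (objs G - cl x)"

lemma cl_x: "x \<in> objs G \<Longrightarrow> x \<in> cl x" using closure_of_subset[of "{x}" OT] by blast

lemma open_ncl: "openin OT (objs G - cl x)" by (simp add: openin_diff)

lemma ex_BisE: "ex x \<in> BisE G" unfolding ex_def BisE_iff using open_ncl by blast

lemma ev_open_cl: assumes "openin OT W" "x \<in> objs G" shows "W \<subseteq> objs G - cl x \<longleftrightarrow> x \<notin> W"
proof
  assume "W \<subseteq> objs G - cl x" then show "x \<notin> W" using cl_x[OF assms(2)] by blast
next
  assume xW: "x \<notin> W"
  have "closedin OT (objs G - W)" using assms(1) by (simp add: closedin_diff)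
  moreover have "{x} \<subseteq> objs G - W" using xW assms by blast
  ultimately have "cl x \<subseteq> objs G - W" by (rule closure_of_minimal[rotated])
  then show "W \<subseteq> objs G - cl x" using assms(1) openin_subset by blast
qed

lemma phi_ex: assumes x: "x \<in> objs G" shows "phi_irr G (ex x) = ev x"
proof
  fix f
  show "phi_irr G (ex x) f = ev x f"
  proof (cases "f \<in> BisE G")
    case False then show ?thesis unfolding phi_irr_def ev_def by simp
  next
    case True
    then obtain W where W: "openin OT W" "f = idt ` W" using BisE_iff by blast
    have s: "W \<subseteq> objs G" "objs G - cl x \<subseteq> objs G" using W openin_subset by auto
    have "f \<subseteq> ex x \<longleftrightarrow> W \<subseteq> objs G - cl x" unfolding ex_def W(2)
      using idt_img_sub[OF s] by blast
    then show ?thesis unfolding phi_irr_def using True ev_open_cl[OF W(1) x] ev_idt[OF W(1)] W(2) by simp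
  qed
qed

lemma ex_irr: assumes x: "x \<in> objs G" shows "irreducible_idem G (ex x)"
  unfolding irreducible_idem_def
proof (intro conjI ballI impI)
  show "ex x \<in> BisE G" by (rule ex_BisE)
  show "ex x \<noteq> bis_one G"
  proof
    assume "ex x = bis_one G"
    then have "idt ` (objs G - cl x) = idt ` objs G" unfolding ex_def bis_one_eq .
    then have "objs G - cl x = objs G" by (rule idt_img_inj[OF Diff_subset order_refl])
    then show False using cl_x[OF x] x by blast
  qed
  fix e1 e2 assume e: "e1 \<in> BisE G" "e2 \<in> BisE G" "ex x = bis_mult G e1 e2"
  obtain V1 where V1: "openin OT V1" "e1 = idt ` V1" using e(1) unfolding BisE_iff by blast
  obtain V2 where V2: "openin OT V2" "e2 = idt ` V2" using e(2) unfolding BisE_iff by blast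
  have s: "V1 \<subseteq> objs G" "V2 \<subseteq> objs G" using V1 V2 openin_subset by auto
  have s2: "V1 \<inter> V2 \<subseteq> objs G" using s by blast
  have "idt ` (objs G - cl x) = idt ` (V1 \<inter> V2)" using e(3) mult_units[OF s] V1 V2 unfolding ex_def by simp
  then have eq: "objs G - cl x = V1 \<inter> V2" by (rule idt_img_inj[OF Diff_subset s2])
  have "x \<notin> V1 \<inter> V2" using eq cl_x[OF x] by blast
  then have "x \<notin> V1 \<or> x \<notin> V2" by blast
  then show "e1 = ex x \<or> e2 = ex x"
  proof
    assume "x \<notin> V1"
    then have "V1 \<subseteq> objs G - cl x" using ev_open_cl[OF V1(1) x] by blast
    then have "V1 = objs G - cl x" using eq by blast
    then show ?thesis using V1 ex_def by simp
  next
    assume "x \<notin> V2"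
    then have "V2 \<subseteq> objs G - cl x" using ev_open_cl[OF V2(1) x] by blast
    then have "V2 = objs G - cl x" using eq by blast
    then show ?thesis using V2 ex_def by simp
  qed
qed

lemma cl_irred: assumes x: "x \<in> objs G" shows "irreducible_closed_in OT (cl x)"
  unfolding irreducible_closed_in_def
proof (intro conjI allI impI)
  show "closedin OT (cl x)" by simp
  fix A1 A2 assume A: "closedin OT A1 \<and> closedin OT A2 \<and> cl x = A1 \<union> A2"
  then have "x \<in> A1 \<or> x \<in> A2" using cl_x[OF x] by blast
  then show "A1 = cl x \<or> A2 = cl x"
  proof
    assume "x \<in> A1"
    then have "cl x \<subseteq> A1" using A closure_of_minimal[of "{x}" A1 OT] by blast
    then show ?thesis using A by blast
  next
    assume "x \<in> A2"
    then have "cl x \<subseteq> A2" using A closure_of_minimal[of "{x}" A2 OT] by blast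
    then show ?thesis using A by blast
  qed
qed

end

locale setg = etg +
  assumes sob: "sober (obj_top G)"
begin

lemma ev_inj: assumes x: "x \<in> objs G" and y: "y \<in> objs G" and e: "ev x = ev y" shows "x = y"
proof -
  have W: "x \<in> W \<longleftrightarrow> y \<in> W" if "openin OT W" for W
    using ev_idt[OF that, of x] ev_idt[OF that, of y] e by simp
  have "x \<in> cl y" unfolding in_closure_of using x W by blast
  then have 1: "cl x \<subseteq> cl y" using closure_of_minimal[of "{x}" "cl y" OT] by simp
  have "y \<in> cl x" unfolding in_closure_of using y W by blast
  then have 2: "cl y \<subseteq> cl x" using closure_of_minimal[of "{y}" "cl x" OT] by simp
  have eq: "cl x = cl y" using 1 2 by (rule subset_antisym)
  have ne: "cl x \<noteq> {}" using cl_x[OF x] by blast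
  have "\<exists>!z. z \<in> objs G \<and> cl x = cl z" using sob cl_irred[OF x] ne unfolding sober_def by blast
  then obtain z where z: "\<And>w. w \<in> objs G \<and> cl x = cl w \<Longrightarrow> w = z" by blast
  have "x = z" using z x by blast
  moreover have "y = z" using z y eq by blast
  ultimately show ?thesis by simp
qed

lemma irr_ev: assumes e: "irreducible_idem G e" shows "\<exists>x\<in>objs G. e = ex x"
proof -
  have eB: "e \<in> BisE G" and ne: "e \<noteq> bis_one G"
    and irr: "\<And>e1 e2. e1 \<in> BisE G \<Longrightarrow> e2 \<in> BisE G \<Longrightarrow> e = bis_mult G e1 e2 \<Longrightarrow> e1 = e \<or> e2 = e"
    using e unfolding irreducible_idem_def by auto
  obtain V where V: "openin OT V" "e = idt ` V" using eB BisE_iff by blast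
  have sV: "V \<subseteq> objs G" using V openin_subset by blast
  define C where "C = objs G - V"
  have Cc: "closedin OT C" unfolding C_def using V by (simp add: closedin_diff)
  have "C \<noteq> {}"
  proof
    assume "C = {}" then have "V = objs G" using sV C_def by blast
    then show False using ne V bis_one_eq by simp
  qed
  moreover have "irreducible_closed_in OT C"
    unfolding irreducible_closed_in_def
  proof (intro conjI allI impI)
    show "closedin OT C" by (rule Cc)
    fix C1 C2 assume A: "closedin OT C1 \<and> closedin OT C2 \<and> C = C1 \<union> C2"
    define V1 where "V1 = objs G - C1"
    define V2 where "V2 = objs G - C2"
    have o: "openin OT V1" "openin OT V2" unfolding V1_def V2_def using A by (auto simp: openin_diff)
    have s: "V1 \<subseteq> objs G" "V2 \<subseteq> objs G" using V1_def V2_def by auto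
    have sC: "C1 \<subseteq> objs G" "C2 \<subseteq> objs G" using A closedin_subset by auto
    have VV: "V = V1 \<inter> V2" using A sV sC unfolding C_def V1_def V2_def by blast
    have "e = bis_mult G (idt ` V1) (idt ` V2)" using mult_units[OF s] V VV by simp
    moreover have "idt ` V1 \<in> BisE G" "idt ` V2 \<in> BisE G" using o BisE_iff by auto
    ultimately have "idt ` V1 = e \<or> idt ` V2 = e" using irr by blast
    then show "C1 = C \<or> C2 = C"
    proof
      assume "idt ` V1 = e"
      then have "V1 = V" using idt_img_inj s sV V by blast
      then show ?thesis using sC unfolding C_def V1_def by blast
    next
      assume "idt ` V2 = e"
      then have "V2 = V" using idt_img_inj s sV V by blast
      then show ?thesis using sC unfolding C_def V2_def by blast
    qed
  qed
  ultimately obtain x where x: "x \<in> objs G" "C = cl x" using sob unfolding sober_def by blast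
  have "V = objs G - cl x" using x sV C_def by blast
  then show ?thesis using V x ex_def by auto
qed

lemma X_eq: "{phi_irr G e | e. irreducible_idem G e} = ev ` objs G"
proof (intro equalityI subsetI)
  fix \<phi> assume "\<phi> \<in> {phi_irr G e | e. irreducible_idem G e}"
  then obtain e where e: "irreducible_idem G e" "\<phi> = phi_irr G e" by blast
  then obtain x where "x \<in> objs G" "e = ex x" using irr_ev by blast
  then show "\<phi> \<in> ev ` objs G" using e phi_ex by simp
next
  fix \<phi> assume "\<phi> \<in> ev ` objs G"
  then obtain x where x: "x \<in> objs G" "\<phi> = ev x" by blast
  then have "\<phi> = phi_irr G (ex x)" using phi_ex by simp
  then show "\<phi> \<in> {phi_irr G e | e. irreducible_idem G e}" using ex_irr[OF x(1)] by blast
qed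

lemma part1: assumes "irreducible_idem G e" shows "phi_irr G e \<in> characters (Bis G) (bis_mult G) (bis_one G) bis_zero"
proof -
  obtain x where x: "x \<in> objs G" "e = ex x" using irr_ev[OF assms] by blast
  then show ?thesis using phi_ex[OF x(1)] ev_char[OF x(1)] by simp
qed

end


context etg begin

lemma star_e: assumes s: "bisection G s" and V: "V \<subseteq> objs G"
  shows "bis_mult G (bis_star G s) (idt ` V) = iv ` {a \<in> s. rg a \<in> V}"
proof (intro equalityI subsetI)
  fix k assume "k \<in> bis_mult G (bis_star G s) (idt ` V)"
  then obtain b u where bu: "b \<in> bis_star G s" "u \<in> idt ` V" "sr b = rg u" "k = cp b u" unfolding mult_mem by blast
  obtain a where a: "a \<in> s" "b = iv a" using bu(1) unfolding bis_star_def by blast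
  obtain y where y: "y \<in> V" "u = idt y" using bu(2) by blast
  have aa: "a \<in> arrs G" "y \<in> objs G" using bis_sub[OF s a(1)] y V by auto
  have ry: "rg a = y" using bu(3) a y aa by simp
  have "k = cp (iv a) (idt (sr (iv a)))" using bu(4) a y aa ry by simp
  also have "\<dots> = iv a" using idr[OF iv_in[OF aa(1)]] .
  finally show "k \<in> iv ` {a \<in> s. rg a \<in> V}" using a ry y by blast
next
  fix k assume "k \<in> iv ` {a \<in> s. rg a \<in> V}"
  then obtain a where a: "a \<in> s" "rg a \<in> V" "k = iv a" by blast
  have aa: "a \<in> arrs G" using bis_sub[OF s a(1)] .
  have "k = cp (iv a) (idt (rg a))" using a aa idr[OF iv_in[OF aa]] by simp
  moreover have "iv a \<in> bis_star G s" unfolding bis_star_def using a by blast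
  moreover have "sr (iv a) = rg (idt (rg a))" using aa rg_in by simp
  ultimately show "k \<in> bis_mult G (bis_star G s) (idt ` V)" unfolding mult_mem using a by blast
qed

lemma sandwich: assumes s: "bisection G s" and V: "V \<subseteq> objs G"
  shows "bis_mult G (bis_mult G (bis_star G s) (idt ` V)) s = idt ` (sr ` {a \<in> s. rg a \<in> V})"
proof (intro equalityI subsetI)
  have irs: "inj_on rg s" using s bisection_iff by blast
  fix k assume "k \<in> bis_mult G (bis_mult G (bis_star G s) (idt ` V)) s"
  then obtain b c where bc: "b \<in> iv ` {a \<in> s. rg a \<in> V}" "c \<in> s" "sr b = rg c" "k = cp b c"
    unfolding mult_mem star_e[OF s V] by blast
  obtain a where a: "a \<in> s" "rg a \<in> V" "b = iv a" using bc(1) by blast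
  have aa: "a \<in> arrs G" "c \<in> arrs G" using bis_sub[OF s] a bc by auto
  have "rg a = rg c" using bc(3) a aa by simp
  then have ac: "a = c" by (rule inj_onD[OF irs _ a(1) bc(2)])
  have "k = idt (sr a)" using bc(4) a(3) ac aa by simp
  then show "k \<in> idt ` (sr ` {a \<in> s. rg a \<in> V})" using a by blast
next
  fix k assume "k \<in> idt ` (sr ` {a \<in> s. rg a \<in> V})"
  then obtain a where a: "a \<in> s" "rg a \<in> V" "k = idt (sr a)" by blast
  have aa: "a \<in> arrs G" using bis_sub[OF s a(1)] .
  have "iv a \<in> iv ` {a \<in> s. rg a \<in> V}" using a by blast
  moreover have "k = cp (iv a) a" using a aa by simp
  moreover have "sr (iv a) = rg a" using aa by simp
  ultimately show "k \<in> bis_mult G (bis_mult G (bis_star G s) (idt ` V)) s"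
    unfolding mult_mem star_e[OF s V] using a by blast
qed

lemma sandwich_open: assumes s: "bisection G s" and V: "openin OT V"
  shows "openin OT (sr ` {a \<in> s. rg a \<in> V})"
proof -
  have "{a \<in> s. rg a \<in> V} = s \<inter> {a \<in> topspace AT. rg a \<in> V}" using bis_sub[OF s] by blast
  moreover have "openin AT (s \<inter> {a \<in> topspace AT. rg a \<in> V})"
    using bis_open[OF s] openin_continuous_map_preimage[OF c_rg V] by blast
  ultimately show ?thesis using sr_open by simp
qed

lemma ss_eq: assumes s: "bisection G s" shows "bis_mult G (bis_star G s) s = idt ` (sr ` s)"
proof -
  have "bis_mult G (bis_star G s) s = bis_mult G (bis_mult G (bis_star G s) (idt ` objs G)) s"
  proof -
    have e: "{a \<in> s. rg a \<in> objs G} = s" using bis_sub[OF s] rg_in by blast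
    have "bis_mult G (bis_star G s) (idt ` objs G) = bis_star G s"
      using star_e[OF s order_refl] e by (simp add: bis_star_def)
    then show ?thesis by simp
  qed
  also have "\<dots> = idt ` (sr ` {a \<in> s. rg a \<in> objs G})" by (rule sandwich[OF s order_refl])
  also have "{a \<in> s. rg a \<in> objs G} = s" using bis_sub[OF s] rg_in by blast
  finally show ?thesis .
qed

lemma ev_charU: assumes s: "bisection G s" and x: "x \<in> objs G"
  shows "ev x \<in> charU (Bis G) (bis_mult G) (bis_one G) bis_zero (bis_mult G (bis_star G s) s) \<longleftrightarrow> x \<in> sr ` s"
  unfolding charU_def ss_eq[OF s] using ev_char[OF x] ev_idt[OF sr_open[OF bis_open[OF s]]] by simp

lemma act_ev: assumes s: "bisection G s" and x: "x \<in> sr ` s"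
  shows "char_act (Bis G) (bis_mult G) (bis_star G) s (ev x) = ev (rg (sec s x))"
proof
  fix f
  show "char_act (Bis G) (bis_mult G) (bis_star G) s (ev x) f = ev (rg (sec s x)) f"
  proof (cases "f \<in> BisE G")
    case False then show ?thesis unfolding char_act_def ev_def by simp
  next
    case True
    then obtain V where V: "openin OT V" "f = idt ` V" unfolding BisE_iff by blast
    have sV: "V \<subseteq> objs G" using V openin_subset by blast
    have "char_act (Bis G) (bis_mult G) (bis_star G) s (ev x) f = ev x (idt ` (sr ` {a \<in> s. rg a \<in> V}))"
      unfolding char_act_def using True V(2) sandwich[OF s sV] by simp
    also have "\<dots> = (x \<in> sr ` {a \<in> s. rg a \<in> V})" by (rule ev_idt[OF sandwich_open[OF s V(1)]])
    also have "\<dots> = (rg (sec s x) \<in> V)"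
    proof
      assume "x \<in> sr ` {a \<in> s. rg a \<in> V}"
      then obtain a where a: "a \<in> s" "rg a \<in> V" "x = sr a" by blast
      then show "rg (sec s x) \<in> V" using sec_eq[OF s a(1)] by simp
    next
      assume "rg (sec s x) \<in> V"
      then show "x \<in> sr ` {a \<in> s. rg a \<in> V}" using sec_in[OF s x] by (metis (mono_tags, lifting) image_eqI mem_Collect_eq)
    qed
    also have "\<dots> = ev (rg (sec s x)) f" using ev_idt[OF V(1)] V(2) by simp
    finally show ?thesis .
  qed
qed

lemma rg_sec_in: "bisection G s \<Longrightarrow> x \<in> sr ` s \<Longrightarrow> rg (sec s x) \<in> objs G"
  using sec_in bis_sub rg_in by blast

end

context setg begin

lemma part2: "S_invariant (Bis G) (bis_mult G) (bis_star G) (bis_one G) bis_zero (ev ` objs G)"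
  unfolding S_invariant_def
proof (intro ballI impI)
  fix s \<phi> assume s: "s \<in> Bis G" and "\<phi> \<in> ev ` objs G"
    and c: "\<phi> \<in> charU (Bis G) (bis_mult G) (bis_one G) bis_zero (bis_mult G (bis_star G s) s)"
  then obtain x where x: "x \<in> objs G" "\<phi> = ev x" by blast
  have sb: "bisection G s" using s unfolding Bis_def by simp
  have xs: "x \<in> sr ` s" using c x ev_charU[OF sb x(1)] by simp
  show "char_act (Bis G) (bis_mult G) (bis_star G) s \<phi> \<in> ev ` objs G"
    using act_ev[OF sb xs] rg_sec_in[OF sb xs] x by simp
qed

end


definition rep :: "'p set \<Rightarrow> 'p" where "rep A = (SOME p. p \<in> A)"

context setg begin

abbreviation "gmS \<equiv> germ (Bis G) (bis_mult G) (bis_star G) (bis_one G) bis_zero"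
abbreviation "gpS \<equiv> germ_pairs (Bis G) (bis_mult G) (bis_star G) (bis_one G) bis_zero"
abbreviation "grS \<equiv> germ_rel (Bis G) (bis_mult G) (bis_star G) (bis_one G) bis_zero"
abbreviation "chS \<equiv> characters (Bis G) (bis_mult G) (bis_one G) bis_zero"
abbreviation "cU \<equiv> charU (Bis G) (bis_mult G) (bis_one G) bis_zero"
abbreviation "ctS \<equiv> char_top (Bis G) (bis_mult G) (bis_one G) bis_zero"

lemma mult_right_units: assumes s: "bisection G s" and V: "V \<subseteq> objs G"
  shows "bis_mult G s (idt ` V) = {g \<in> s. sr g \<in> V}"
proof (intro equalityI subsetI)
  fix k assume "k \<in> bis_mult G s (idt ` V)"
  then obtain g u where gu: "g \<in> s" "u \<in> idt ` V" "sr g = rg u" "k = cp g u" unfolding mult_mem by blast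
  obtain y where y: "y \<in> V" "u = idt y" using gu(2) by blast
  have a: "g \<in> arrs G" "y \<in> objs G" using bis_sub[OF s gu(1)] y V by auto
  have sy: "sr g = y" using gu(3) y a by simp
  have "k = cp g (idt (sr g))" using gu(4) y sy by simp
  then have "k = g" using idr[OF a(1)] by simp
  then show "k \<in> {g \<in> s. sr g \<in> V}" using gu sy y by simp
next
  fix k assume k: "k \<in> {g \<in> s. sr g \<in> V}"
  then have a: "k \<in> arrs G" "k \<in> s" "sr k \<in> V" using bis_sub[OF s] by auto
  have "k = cp k (idt (sr k))" using idr[OF a(1)] by simp
  moreover have "sr k = rg (idt (sr k))" using a sr_in by simp
  ultimately show "k \<in> bis_mult G s (idt ` V)" unfolding mult_mem using a by blast
qed

lemma germ_key: assumes s: "bisection G s" and t: "bisection G t" and xs: "x \<in> sr ` s" and xt: "x \<in> sr ` t"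
  shows "(\<exists>e\<in>BisE G. ev x e \<and> bis_mult G s e = bis_mult G t e) \<longleftrightarrow> sec s x = sec t x"
proof
  assume "\<exists>e\<in>BisE G. ev x e \<and> bis_mult G s e = bis_mult G t e"
  then obtain e where e: "e \<in> BisE G" "ev x e" "bis_mult G s e = bis_mult G t e" by blast
  obtain V where V: "openin OT V" "e = idt ` V" using e(1) unfolding BisE_iff by blast
  have sV: "V \<subseteq> objs G" using V openin_subset by blast
  have xV: "x \<in> V" using e(2) ev_idt[OF V(1)] V(2) by simp
  have "sec s x \<in> {g \<in> s. sr g \<in> V}" using sec_in[OF s xs] xV by simp
  moreover have "{g \<in> s. sr g \<in> V} = {g \<in> t. sr g \<in> V}"
    using e(3) V(2) mult_right_units[OF s sV] mult_right_units[OF t sV] by simp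
  ultimately have "sec s x \<in> {g \<in> t. sr g \<in> V}" by simp
  then have "sec s x \<in> t" by simp
  then have "sec t (sr (sec s x)) = sec s x" by (rule sec_eq[OF t])
  then show "sec s x = sec t x" using sec_in[OF s xs] by simp
next
  assume eq: "sec s x = sec t x"
  define V where "V = sr ` (s \<inter> t)"
  have Vo: "openin OT V" unfolding V_def using sr_open bis_open[OF s] bis_open[OF t] by blast
  have sV: "V \<subseteq> objs G" using Vo openin_subset by blast
  have xV: "x \<in> V" unfolding V_def using sec_in[OF s xs] sec_in[OF t xt] eq by (metis IntI imageI)
  have ms: "{g \<in> s. sr g \<in> V} = s \<inter> t"
  proof (intro equalityI subsetI)
    fix g assume g: "g \<in> {g \<in> s. sr g \<in> V}"
    then obtain h where h: "h \<in> s \<inter> t" "sr g = sr h" unfolding V_def by blast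
    have "inj_on sr s" using s bisection_iff by blast
    then have "g = h" using inj_onD g h by fastforce
    then show "g \<in> s \<inter> t" using h by simp
  qed (auto simp: V_def)
  have mt: "{g \<in> t. sr g \<in> V} = s \<inter> t"
  proof (intro equalityI subsetI)
    fix g assume g: "g \<in> {g \<in> t. sr g \<in> V}"
    then obtain h where h: "h \<in> s \<inter> t" "sr g = sr h" unfolding V_def by blast
    have "inj_on sr t" using t bisection_iff by blast
    then have "g = h" using inj_onD g h by fastforce
    then show "g \<in> s \<inter> t" using h by simp
  qed (auto simp: V_def)
  have "idt ` V \<in> BisE G" using Vo BisE_iff by blast
  moreover have "ev x (idt ` V)" using ev_idt[OF Vo] xV by simp
  moreover have "bis_mult G s (idt ` V) = bis_mult G t (idt ` V)"
    using mult_right_units[OF s sV] mult_right_units[OF t sV] ms mt by simp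
  ultimately show "\<exists>e\<in>BisE G. ev x e \<and> bis_mult G s e = bis_mult G t e" by blast
qed

lemma gp_ev: assumes x: "x \<in> objs G" shows "(t, ev x) \<in> gpS \<longleftrightarrow> bisection G t \<and> x \<in> sr ` t"
proof -
  have "(t, ev x) \<in> gpS \<longleftrightarrow> t \<in> Bis G \<and> ev x \<in> cU (bis_mult G (bis_star G t) t)"
    unfolding germ_pairs_def by simp
  also have "\<dots> \<longleftrightarrow> bisection G t \<and> x \<in> sr ` t"
    using ev_charU[OF _ x, of t] unfolding Bis_def by auto
  finally show ?thesis .
qed

lemma sr_objs: "bisection G s \<Longrightarrow> x \<in> sr ` s \<Longrightarrow> x \<in> objs G"
  using bis_sub sr_in by blast

lemma gm_mem_iff: assumes s: "bisection G s" and xs: "x \<in> sr ` s"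
  shows "(t, \<psi>) \<in> gmS s (ev x) \<longleftrightarrow> \<psi> = ev x \<and> bisection G t \<and> x \<in> sr ` t \<and> sec t x = sec s x"
proof -
  have x: "x \<in> objs G" using sr_objs[OF s xs] .
  have "(t, \<psi>) \<in> gmS s (ev x) \<longleftrightarrow> ((s, ev x), (t, \<psi>)) \<in> grS" unfolding germ_def by blast
  also have "\<dots> \<longleftrightarrow> (s, ev x) \<in> gpS \<and> (t, \<psi>) \<in> gpS \<and> ev x = \<psi> \<and>
        (\<exists>e\<in>BisE G. ev x e \<and> bis_mult G s e = bis_mult G t e)" unfolding germ_rel_def by simp
  also have "\<dots> \<longleftrightarrow> \<psi> = ev x \<and> bisection G t \<and> x \<in> sr ` t \<and> sec t x = sec s x"
  proof
    assume a: "(s, ev x) \<in> gpS \<and> (t, \<psi>) \<in> gpS \<and> ev x = \<psi> \<and>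
        (\<exists>e\<in>BisE G. ev x e \<and> bis_mult G s e = bis_mult G t e)"
    then have p: "\<psi> = ev x" "bisection G t" "x \<in> sr ` t" using gp_ev[OF x] by auto
    then have "sec s x = sec t x" using a germ_key[OF s p(2) xs p(3)] by blast
    then show "\<psi> = ev x \<and> bisection G t \<and> x \<in> sr ` t \<and> sec t x = sec s x" using p by simp
  next
    assume a: "\<psi> = ev x \<and> bisection G t \<and> x \<in> sr ` t \<and> sec t x = sec s x"
    then have "\<exists>e\<in>BisE G. ev x e \<and> bis_mult G s e = bis_mult G t e" using germ_key[OF s _ xs] by auto
    then show "(s, ev x) \<in> gpS \<and> (t, \<psi>) \<in> gpS \<and> ev x = \<psi> \<and>
        (\<exists>e\<in>BisE G. ev x e \<and> bis_mult G s e = bis_mult G t e)" using a gp_ev[OF x] s xs by auto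
  qed
  finally show ?thesis .
qed

lemma gm_self: "bisection G s \<Longrightarrow> x \<in> sr ` s \<Longrightarrow> (s, ev x) \<in> gmS s (ev x)"
  using gm_mem_iff by simp

lemma gm_eq: assumes s: "bisection G s" and xs: "x \<in> sr ` s" and t: "bisection G t" and xt: "x \<in> sr ` t"
  and e: "sec s x = sec t x" shows "gmS s (ev x) = gmS t (ev x)"
proof (intro equalityI subsetI)
  fix p assume "p \<in> gmS s (ev x)" then show "p \<in> gmS t (ev x)"
    using gm_mem_iff[OF s xs] gm_mem_iff[OF t xt] e by (cases p) simp
next
  fix p assume "p \<in> gmS t (ev x)" then show "p \<in> gmS s (ev x)"
    using gm_mem_iff[OF s xs] gm_mem_iff[OF t xt] e by (cases p) simp
qed

lemma gm_eq_iff: assumes s: "bisection G s" and xs: "x \<in> sr ` s" and t: "bisection G t" and yt: "y \<in> sr ` t"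
  shows "gmS s (ev x) = gmS t (ev y) \<longleftrightarrow> x = y \<and> sec s x = sec t y"
proof
  assume eq: "gmS s (ev x) = gmS t (ev y)"
  have "(s, ev x) \<in> gmS t (ev y)" using gm_self[OF s xs] eq by simp
  then have 1: "ev x = ev y" "sec s y = sec t y" using gm_mem_iff[OF t yt] by auto
  have "x = y" using ev_inj[OF sr_objs[OF s xs] sr_objs[OF t yt] 1(1)] .
  then show "x = y \<and> sec s x = sec t y" using 1 by simp
next
  assume "x = y \<and> sec s x = sec t y"
  then show "gmS s (ev x) = gmS t (ev y)" using gm_eq[OF s xs t] yt by auto
qed


lemma rep_gm: assumes s: "bisection G s" and xs: "x \<in> sr ` s"
  shows "snd (rep (gmS s (ev x))) = ev x" "bisection G (fst (rep (gmS s (ev x))))"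
    "x \<in> sr ` fst (rep (gmS s (ev x)))" "sec (fst (rep (gmS s (ev x)))) x = sec s x"
proof -
  have "rep (gmS s (ev x)) \<in> gmS s (ev x)" unfolding rep_def using gm_self[OF s xs] by (rule someI)
  then obtain t \<psi> where tp: "rep (gmS s (ev x)) = (t, \<psi>)" "(t, \<psi>) \<in> gmS s (ev x)" by (metis prod.collapse)
  then show "snd (rep (gmS s (ev x))) = ev x" "bisection G (fst (rep (gmS s (ev x))))"
    "x \<in> sr ` fst (rep (gmS s (ev x)))" "sec (fst (rep (gmS s (ev x)))) x = sec s x"
    using gm_mem_iff[OF s xs] by auto
qed

end


context setg begin

abbreviation "GG \<equiv> germ_groupoid (Bis G) (bis_mult G) (bis_star G) (bis_one G) bis_zero"
abbreviation "BS \<equiv> {{gmS s \<phi> | \<phi>. \<phi> \<in> U} | s U. s \<in> Bis G \<and>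
               openin ctS U \<and> U \<subseteq> cU (bis_mult G (bis_star G s) s)}"
abbreviation "acS \<equiv> char_act (Bis G) (bis_mult G) (bis_star G)"

lemma GG_simps:
  "obj_top GG = ctS"
  "arr_top GG = topology_generated_by BS"
  "src GG A = snd (rep A)"
  "rng GG A = acS (fst (rep A)) (snd (rep A))"
  "comp GG A B = gmS (bis_mult G (fst (rep A)) (fst (rep B))) (snd (rep B))"
  "ginv GG A = gmS (bis_star G (fst (rep A))) (acS (fst (rep A)) (snd (rep A)))"
  "ident GG \<phi> = gmS (bis_one G) \<phi>"
  unfolding germ_groupoid_def Let_def rep_def by simp_all

lemma ct_gen: "e \<in> BisE G \<Longrightarrow> openin ctS (cU e)"
  unfolding char_top_def by (rule topology_generated_by_Basis) blast

lemma ct_top: "topspace ctS = chS"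
proof -
  have "topspace ctS = \<Union>{cU e | e. e \<in> BisE G}" unfolding char_top_def by simp
  also have "\<dots> = chS"
  proof (intro equalityI subsetI)
    fix \<phi> assume "\<phi> \<in> \<Union>{cU e | e. e \<in> BisE G}" then show "\<phi> \<in> chS" unfolding charU_def by blast
  next
    fix \<phi> assume p: "\<phi> \<in> chS"
    then have "\<phi> (bis_one G)" unfolding characters_def by blast
    then have "\<phi> \<in> cU (bis_one G)" using p unfolding charU_def by blast
    then show "\<phi> \<in> \<Union>{cU e | e. e \<in> BisE G}" using one_BisE by blast
  qed
  finally show ?thesis .
qed

lemma gm_refl: assumes "(s, \<phi>) \<in> gpS" shows "(s, \<phi>) \<in> gmS s \<phi>"
proof -
  have "\<phi> \<in> chS" using assms unfolding germ_pairs_def charU_def by blast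
  then have "\<phi> (bis_one G)" unfolding characters_def by blast
  then have "((s, \<phi>), (s, \<phi>)) \<in> grS" unfolding germ_rel_def using assms one_BisE by blast
  then show ?thesis unfolding germ_def by blast
qed

lemma ss_BisE: "bisection G s \<Longrightarrow> bis_mult G (bis_star G s) s \<in> BisE G"
  using ss_eq BisE_iff sr_open bis_open by metis

definition germs where "germs = {gmS s (ev x) | s x. bisection G s \<and> x \<in> sr ` s}"

lemma germs_sub: "germs \<subseteq> \<Union>BS"
proof
  fix A assume "A \<in> germs"
  then obtain s x where A: "A = gmS s (ev x)" "bisection G s" "x \<in> sr ` s" unfolding germs_def by blast
  have x: "x \<in> objs G" using sr_objs A by blast
  have "ev x \<in> cU (bis_mult G (bis_star G s) s)" using ev_charU[OF A(2) x] A by simp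
  moreover have "openin ctS (cU (bis_mult G (bis_star G s) s))" using ct_gen ss_BisE A by blast
  moreover have "s \<in> Bis G" using A unfolding Bis_def by simp
  ultimately have "{gmS s \<phi> | \<phi>. \<phi> \<in> cU (bis_mult G (bis_star G s) s)} \<in> BS" by blast
  moreover have "A \<in> {gmS s \<phi> | \<phi>. \<phi> \<in> cU (bis_mult G (bis_star G s) s)}" using A \<open>ev x \<in> _\<close> by blast
  ultimately show "A \<in> \<Union>BS" by blast
qed

lemma R_eq: "{A \<in> arrs GG. src GG A \<in> ev ` objs G} = germs"
proof (intro equalityI subsetI)
  fix A assume A: "A \<in> {A \<in> arrs GG. src GG A \<in> ev ` objs G}"
  then have "A \<in> \<Union>BS" using GG_simps by simp
  then obtain s U \<phi> where sU: "s \<in> Bis G" "U \<subseteq> cU (bis_mult G (bis_star G s) s)" "\<phi> \<in> U" "A = gmS s \<phi>" by blast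
  have gp: "(s, \<phi>) \<in> gpS" unfolding germ_pairs_def using sU by blast
  have "rep A \<in> A" unfolding rep_def using gm_refl[OF gp] sU(4) by (metis someI)
  then have "snd (rep A) = \<phi>" using sU(4) unfolding germ_def germ_rel_def by auto
  then obtain x where x: "x \<in> objs G" "\<phi> = ev x" using A GG_simps by auto
  have sb: "bisection G s" using sU unfolding Bis_def by simp
  have "x \<in> sr ` s" using ev_charU[OF sb x(1)] sU x by auto
  then show "A \<in> germs" unfolding germs_def using sU x sb by blast
next
  fix A assume A: "A \<in> germs"
  then obtain s x where sx: "A = gmS s (ev x)" "bisection G s" "x \<in> sr ` s" unfolding germs_def by blast
  have "src GG A = ev x" using rep_gm[OF sx(2,3)] sx GG_simps by simp
  moreover have "A \<in> arrs GG" unfolding GG_simps topology_generated_by_topspace using germs_sub A by blast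
  ultimately show "A \<in> {A \<in> arrs GG. src GG A \<in> ev ` objs G}" using sr_objs[OF sx(2,3)] by auto
qed

definition fo where "fo \<phi> = (THE x. x \<in> objs G \<and> \<phi> = ev x)"

lemma fo_ev: "x \<in> objs G \<Longrightarrow> fo (ev x) = x"
  unfolding fo_def using ev_inj by blast

definition fa where
  "fa A = sec (fst (rep A)) (fo (snd (rep A)))"

lemma fa_gm: assumes "bisection G s" "x \<in> sr ` s" shows "fa (gmS s (ev x)) = sec s x"
  unfolding fa_def using rep_gm[OF assms] fo_ev[OF sr_objs[OF assms]] by simp

definition bo where "bo g = (SOME B. bisection G B \<and> g \<in> B)"

lemma bo: assumes "g \<in> arrs G" shows "bisection G (bo g)" "g \<in> bo g"
proof -
  have "\<exists>B. bisection G B \<and> g \<in> B" using et assms unfolding etale_def by blast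
  then have "bisection G (bo g) \<and> g \<in> bo g" unfolding bo_def by (rule someI_ex)
  then show "bisection G (bo g)" "g \<in> bo g" by auto
qed

definition ga where
  "ga g = gmS (bo g) (ev (sr g))"

lemma ga_in: "g \<in> arrs G \<Longrightarrow> ga g \<in> germs"
  unfolding ga_def germs_def using bo by blast

lemma fa_ga: "g \<in> arrs G \<Longrightarrow> fa (ga g) = g"
  unfolding ga_def using fa_gm bo sec_eq by simp

lemma germs_E: assumes "A \<in> germs" obtains s x where "A = gmS s (ev x)" "bisection G s" "x \<in> sr ` s"
  using assms unfolding germs_def by blast

lemma fa_in: "A \<in> germs \<Longrightarrow> fa A \<in> arrs G"
  by (metis germs_E fa_gm sec_in(1) bis_sub)

lemma ga_fa: assumes A: "A \<in> germs" shows "ga (fa A) = A"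
proof -
  obtain s x where sx: "A = gmS s (ev x)" "bisection G s" "x \<in> sr ` s" using A germs_E by blast
  define a where "a = sec s x"
  have a: "a \<in> s" "sr a = x" using sec_in[OF sx(2,3)] a_def by auto
  have aa: "a \<in> arrs G" using bis_sub[OF sx(2) a(1)] .
  have fa: "fa A = a" using fa_gm[OF sx(2,3)] sx a_def by simp
  have "sec (bo a) x = a" using sec_eq[OF bo(1)[OF aa] bo(2)[OF aa]] a by simp
  then have "gmS (bo a) (ev x) = gmS s (ev x)"
    using gm_eq[OF bo(1)[OF aa] _ sx(2,3)] a bo(2)[OF aa] a_def by (metis imageI)
  then show ?thesis using fa a unfolding ga_def sx(1) by simp
qed

lemma ev_cont: "continuous_map OT ctS ev"
  unfolding char_top_def
proof (rule continuous_on_generated_topo)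
  fix U assume "U \<in> {cU e | e. e \<in> BisE G}"
  then obtain e where e: "e \<in> BisE G" "U = cU e" by blast
  then obtain V where V: "openin OT V" "e = idt ` V" unfolding BisE_iff by blast
  have "ev -` U \<inter> objs G = V"
    using e V ev_idt[OF V(1)] ev_char openin_subset[OF V(1)] unfolding charU_def by auto
  then show "openin OT (ev -` U \<inter> objs G)" using V by simp
next
  show "ev ` objs G \<subseteq> \<Union> {cU e | e. e \<in> BisE G}"
    using ct_top ev_char unfolding char_top_def by auto
qed

lemma obj_homeo: "homeomorphic_map (subtopology ctS (ev ` objs G)) OT fo"
  unfolding homeomorphic_map_maps homeomorphic_maps_def
proof (intro exI[of _ ev] conjI ballI)
  show "continuous_map (subtopology ctS (ev ` objs G)) OT fo"
    unfolding continuous_map_def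
  proof (intro conjI allI impI)
    show "fo \<in> topspace (subtopology ctS (ev ` objs G)) \<rightarrow> objs G" using fo_ev by auto
    fix W assume W: "openin OT W"
    have "{x \<in> topspace (subtopology ctS (ev ` objs G)). fo x \<in> W} = cU (idt ` W) \<inter> ev ` objs G"
      using fo_ev ev_idt[OF W] ev_char ct_top unfolding charU_def by auto
    moreover have "openin ctS (cU (idt ` W))" using ct_gen W BisE_iff by blast
    ultimately show "openin (subtopology ctS (ev ` objs G)) {x \<in> topspace (subtopology ctS (ev ` objs G)). fo x \<in> W}"
      using openin_subtopology by blast
  qed
  show "continuous_map OT (subtopology ctS (ev ` objs G)) ev"
    unfolding continuous_map_in_subtopology using ev_cont by auto
  fix \<phi> assume "\<phi> \<in> topspace (subtopology ctS (ev ` objs G))"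
  then show "ev (fo \<phi>) = \<phi>" using fo_ev by auto
next
  fix x assume "x \<in> objs G" then show "fo (ev x) = x" by (rule fo_ev)
qed

end


context setg begin

lemma germs_top: "topspace (subtopology (topology_generated_by BS) germs) = germs"
  using germs_sub by auto

lemma BS_mem: assumes "bisection G B" shows "{gmS B \<phi> | \<phi>. \<phi> \<in> cU (bis_mult G (bis_star G B) B)} \<in> BS"
proof -
  have "B \<in> Bis G" using assms unfolding Bis_def by simp
  moreover have "openin ctS (cU (bis_mult G (bis_star G B) B))" using ct_gen ss_BisE assms by blast
  ultimately show ?thesis by blast
qed

lemma gp_of_cU: "s \<in> Bis G \<Longrightarrow> \<phi> \<in> cU (bis_mult G (bis_star G s) s) \<Longrightarrow> (s, \<phi>) \<in> gpS"
  unfolding germ_pairs_def by blast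

lemma fa_cont: "continuous_map (subtopology (topology_generated_by BS) germs) AT fa"
  unfolding continuous_map_def
proof (intro conjI allI impI)
  show "fa \<in> topspace (subtopology (topology_generated_by BS) germs) \<rightarrow> arrs G"
    using germs_top fa_in by auto
  fix W assume W: "openin AT W"
  define O' where "O' = \<Union>{{gmS B \<phi> | \<phi>. \<phi> \<in> cU (bis_mult G (bis_star G B) B)} | B. bisection G B \<and> B \<subseteq> W}"
  have oO: "openin (topology_generated_by BS) O'" unfolding O'_def
  proof (rule openin_Union)
    fix S assume "S \<in> {{gmS B \<phi> | \<phi>. \<phi> \<in> cU (bis_mult G (bis_star G B) B)} | B. bisection G B \<and> B \<subseteq> W}"
    then obtain B where "bisection G B" "S = {gmS B \<phi> | \<phi>. \<phi> \<in> cU (bis_mult G (bis_star G B) B)}" by blast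
    then have "S \<in> BS" using BS_mem by simp
    then show "openin (topology_generated_by BS) S" by (rule topology_generated_by_Basis)
  qed
  have "{A \<in> topspace (subtopology (topology_generated_by BS) germs). fa A \<in> W} = O' \<inter> germs"
  proof (intro equalityI subsetI)
    fix A assume "A \<in> {A \<in> topspace (subtopology (topology_generated_by BS) germs). fa A \<in> W}"
    then have A: "A \<in> germs" "fa A \<in> W" using germs_top by auto
    obtain s x where sx: "A = gmS s (ev x)" "bisection G s" "x \<in> sr ` s" using A(1) germs_E by blast
    have fx: "fa A = sec s x" using fa_gm[OF sx(2,3)] sx(1) by simp
    define B where "B = s \<inter> W"
    have Bb: "bisection G B" unfolding B_def using bis_open_sub[OF sx(2)] bis_open[OF sx(2)] W by blast
    have sB: "sec s x \<in> B" using sec_in[OF sx(2,3)] A(2) fx B_def by simp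
    have xB: "x \<in> sr ` B" using sB sec_in[OF sx(2,3)] by (metis imageI)
    have "sec B x = sec s x" using sec_eq[OF Bb sB] sec_in[OF sx(2,3)] by simp
    then have AB: "A = gmS B (ev x)" using gm_eq[OF sx(2,3) Bb xB] sx(1) by simp
    have "ev x \<in> cU (bis_mult G (bis_star G B) B)" using ev_charU[OF Bb sr_objs[OF Bb xB]] xB by simp
    then have "A \<in> O'" unfolding O'_def using AB Bb B_def by blast
    then show "A \<in> O' \<inter> germs" using A by simp
  next
    fix A assume A: "A \<in> O' \<inter> germs"
    then obtain B \<phi> where B: "bisection G B" "B \<subseteq> W" "\<phi> \<in> cU (bis_mult G (bis_star G B) B)" "A = gmS B \<phi>"
      unfolding O'_def by blast
    obtain s x where sx: "A = gmS s (ev x)" "bisection G s" "x \<in> sr ` s" using A germs_E by blast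
    have "(B, \<phi>) \<in> gpS" using gp_of_cU B unfolding Bis_def by simp
    then have "(B, \<phi>) \<in> gmS s (ev x)" using gm_refl B(4) sx(1) by simp
    then have e: "\<phi> = ev x" "x \<in> sr ` B" "sec B x = sec s x" using gm_mem_iff[OF sx(2,3)] by auto
    have "fa A = sec B x" using fa_gm[OF sx(2,3)] sx(1) e by simp
    then have "fa A \<in> W" using sec_in[OF B(1) e(2)] B(2) by auto
    then show "A \<in> {A \<in> topspace (subtopology (topology_generated_by BS) germs). fa A \<in> W}"
      using A germs_top by simp
  qed
  then show "openin (subtopology (topology_generated_by BS) germs)
         {A \<in> topspace (subtopology (topology_generated_by BS) germs). fa A \<in> W}"
    using oO openin_subtopology by blast
qed

lemma sr_ev_cont: "continuous_map AT ctS (\<lambda>g. ev (sr g))"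
  using continuous_map_compose[OF c_sr ev_cont] by (simp add: o_def)

lemma ga_cont: "continuous_map AT (subtopology (topology_generated_by BS) germs) ga"
  unfolding continuous_map_in_subtopology
proof
  show "ga \<in> arrs G \<rightarrow> germs" using ga_in by auto
  show "continuous_map AT (topology_generated_by BS) ga"
  proof (rule continuous_on_generated_topo)
    show "ga ` arrs G \<subseteq> \<Union> BS" using ga_in germs_sub by blast
    fix U assume "U \<in> BS"
    then obtain s Uc where sU: "U = {gmS s \<phi> | \<phi>. \<phi> \<in> Uc}" "s \<in> Bis G" "openin ctS Uc"
         "Uc \<subseteq> cU (bis_mult G (bis_star G s) s)" by blast
    have sb: "bisection G s" using sU unfolding Bis_def by simp
    have "ga -` U \<inter> arrs G = s \<inter> {g \<in> arrs G. ev (sr g) \<in> Uc}"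
    proof (intro equalityI subsetI)
      fix g assume g: "g \<in> ga -` U \<inter> arrs G"
      then obtain \<phi> where p: "\<phi> \<in> Uc" "ga g = gmS s \<phi>" using sU by auto
      have ga: "g \<in> arrs G" using g by simp
      have sg: "sr g \<in> sr ` bo g" using bo[OF ga] by blast
      have "(s, \<phi>) \<in> gpS" using gp_of_cU sU p by blast
      then have "(s, \<phi>) \<in> gmS (bo g) (ev (sr g))" using gm_refl p(2) unfolding ga_def by simp
      then have e: "\<phi> = ev (sr g)" "sr g \<in> sr ` s" "sec s (sr g) = sec (bo g) (sr g)"
        using gm_mem_iff[OF bo(1)[OF ga] sg] by auto
      have "sec (bo g) (sr g) = g" using sec_eq[OF bo[OF ga]] .
      then have "g \<in> s" using sec_in[OF sb e(2)] e(3) by simp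
      then show "g \<in> s \<inter> {g \<in> arrs G. ev (sr g) \<in> Uc}" using e p ga by simp
    next
      fix g assume g: "g \<in> s \<inter> {g \<in> arrs G. ev (sr g) \<in> Uc}"
      then have ga: "g \<in> arrs G" "g \<in> s" "ev (sr g) \<in> Uc" by auto
      have "sec (bo g) (sr g) = sec s (sr g)" using sec_eq[OF bo[OF ga(1)]] sec_eq[OF sb ga(2)] by simp
      then have "ga g = gmS s (ev (sr g))" unfolding ga_def
        using gm_eq[OF bo(1)[OF ga(1)] _ sb] bo(2)[OF ga(1)] ga(2) by (metis imageI)
      then show "g \<in> ga -` U \<inter> arrs G" using sU ga by blast
    qed
    moreover have "openin AT (s \<inter> {g \<in> arrs G. ev (sr g) \<in> Uc})"
      using bis_open[OF sb] openin_continuous_map_preimage[OF sr_ev_cont sU(3)] by blast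
    ultimately show "openin AT (ga -` U \<inter> arrs G)" by simp
  qed
qed

lemma arr_homeo: "homeomorphic_map (subtopology (topology_generated_by BS) germs) AT fa"
  unfolding homeomorphic_map_maps homeomorphic_maps_def
proof (intro exI[of _ ga] conjI ballI)
  show "continuous_map (subtopology (topology_generated_by BS) germs) AT fa" by (rule fa_cont)
  show "continuous_map AT (subtopology (topology_generated_by BS) germs) ga" by (rule ga_cont)
  fix A assume "A \<in> topspace (subtopology (topology_generated_by BS) germs)"
  then show "ga (fa A) = A" using ga_fa germs_top by simp
next
  fix g assume "g \<in> arrs G" then show "fa (ga g) = g" by (rule fa_ga)
qed

end


lemma restrict_simps:
  "obj_top (restrict_gpd H X) = subtopology (obj_top H) X"
  "arr_top (restrict_gpd H X) = subtopology (arr_top H) {g \<in> arrs H. src H g \<in> X}"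
  "src (restrict_gpd H X) = src H" "rng (restrict_gpd H X) = rng H"
  "comp (restrict_gpd H X) = comp H" "ginv (restrict_gpd H X) = ginv H"
  "ident (restrict_gpd H X) = ident H"
  by (simp_all add: restrict_gpd_def)

context setg begin

lemma rep_props: assumes A: "A \<in> germs"
  obtains x where "snd (rep A) = ev x" "bisection G (fst (rep A))" "x \<in> sr ` fst (rep A)"
    "fa A = sec (fst (rep A)) x" "A = gmS (fst (rep A)) (ev x)"
proof -
  obtain s x where sx: "A = gmS s (ev x)" "bisection G s" "x \<in> sr ` s" using A germs_E by blast
  have r: "snd (rep A) = ev x" "bisection G (fst (rep A))" "x \<in> sr ` fst (rep A)" "sec (fst (rep A)) x = sec s x"
    using rep_gm[OF sx(2,3)] sx(1) by auto
  have "fa A = sec s x" using fa_gm[OF sx(2,3)] sx(1) by simp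
  moreover have "A = gmS (fst (rep A)) (ev x)" using gm_eq[OF sx(2,3) r(2,3)] r(4) sx(1) by simp
  ultimately show ?thesis using that r by simp
qed

lemma src_eq: assumes A: "A \<in> germs" shows "sr (fa A) = fo (src GG A)"
proof -
  obtain x where r: "snd (rep A) = ev x" "bisection G (fst (rep A))" "x \<in> sr ` fst (rep A)"
    "fa A = sec (fst (rep A)) x" "A = gmS (fst (rep A)) (ev x)" by (rule rep_props[OF A])
  show ?thesis using r sec_in[OF r(2,3)] fo_ev[OF sr_objs[OF r(2,3)]] GG_simps by simp
qed

lemma rng_eq: assumes A: "A \<in> germs" shows "rg (fa A) = fo (rng GG A)"
proof -
  obtain x where r: "snd (rep A) = ev x" "bisection G (fst (rep A))" "x \<in> sr ` fst (rep A)"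
    "fa A = sec (fst (rep A)) x" "A = gmS (fst (rep A)) (ev x)" by (rule rep_props[OF A])
  have "rng GG A = acS (fst (rep A)) (snd (rep A))" by (rule GG_simps(4))
  also have "\<dots> = acS (fst (rep A)) (ev x)" unfolding r(1) ..
  also have "\<dots> = ev (rg (sec (fst (rep A)) x))" by (rule act_ev[OF r(2,3)])
  finally have "fo (rng GG A) = rg (sec (fst (rep A)) x)" using fo_ev[OF rg_sec_in[OF r(2,3)]] by simp
  then show ?thesis using r(4) by simp
qed

lemma inv_eq: assumes A: "A \<in> germs" shows "iv (fa A) = fa (ginv GG A)"
proof -
  obtain x where r: "snd (rep A) = ev x" "bisection G (fst (rep A))" "x \<in> sr ` fst (rep A)"
    "fa A = sec (fst (rep A)) x" "A = gmS (fst (rep A)) (ev x)" by (rule rep_props[OF A])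
  define t where "t = fst (rep A)"
  define a where "a = sec t x"
  have a: "a \<in> t" using sec_in[OF r(2,3)] t_def a_def by simp
  have tb: "bisection G t" using r t_def by simp
  have "ginv GG A = gmS (bis_star G t) (acS t (snd (rep A)))" unfolding t_def by (rule GG_simps(6))
  also have "\<dots> = gmS (bis_star G t) (acS t (ev x))" unfolding r(1) ..
  also have "\<dots> = gmS (bis_star G t) (ev (rg a))" unfolding a_def t_def act_ev[OF r(2,3)] ..
  finally have ginv: "ginv GG A = gmS (bis_star G t) (ev (rg a))" .
  moreover have "fa (gmS (bis_star G t) (ev (rg a))) = iv a"
    using fa_gm[OF star_bis[OF tb] sec_star(1)[OF tb a]] sec_star(2)[OF tb a] by simp
  ultimately show ?thesis using r(4) t_def a_def by simp
qed

lemma one_bis: "bisection G (bis_one G)"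
  unfolding bis_one_eq using idt_bis[OF openin_topspace] .

lemma ident_eq: assumes x: "x \<in> objs G" shows "idt x = fa (ident GG (ev x))"
proof -
  have m: "idt x \<in> bis_one G" using x bis_one_eq by simp
  have xs: "x \<in> sr ` bis_one G" using m x by (metis sr_idt imageI)
  have "sec (bis_one G) x = idt x" using sec_eq[OF one_bis m] x by simp
  then show ?thesis using fa_gm[OF one_bis xs] GG_simps by simp
qed

lemma comp_eq: assumes A: "A \<in> germs" and B: "B \<in> germs" and c: "src GG A = rng GG B"
  shows "cp (fa A) (fa B) = fa (comp GG A B)"
proof -
  obtain y where ra: "snd (rep A) = ev y" "bisection G (fst (rep A))" "y \<in> sr ` fst (rep A)"
    "fa A = sec (fst (rep A)) y" "A = gmS (fst (rep A)) (ev y)" by (rule rep_props[OF A])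
  obtain x where rb: "snd (rep B) = ev x" "bisection G (fst (rep B))" "x \<in> sr ` fst (rep B)"
    "fa B = sec (fst (rep B)) x" "B = gmS (fst (rep B)) (ev x)" by (rule rep_props[OF B])
  define s where "s = fst (rep A)"
  define t where "t = fst (rep B)"
  define b where "b = sec t x"
  have sb: "bisection G s" "bisection G t" using ra rb s_def t_def by auto
  have xt: "x \<in> sr ` t" using rb t_def by simp
  have "ev y = ev (rg b)" using c ra(1) act_ev[OF rb(2,3)] rb(1) GG_simps b_def t_def by simp
  then have yb: "y = rg b" using ev_inj sr_objs[OF ra(2,3)] rg_sec_in[OF rb(2,3)] b_def t_def by blast
  have ys: "rg (sec t x) \<in> sr ` s" using ra(3) yb s_def b_def by simp
  have "comp GG A B = gmS (bis_mult G s t) (ev x)" using GG_simps rb(1) s_def t_def by simp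
  moreover have "fa (gmS (bis_mult G s t) (ev x)) = cp (sec s (rg (sec t x))) (sec t x)"
    using fa_gm[OF prod_bis[OF sb] sec_mult(1)[OF sb xt ys]] sec_mult(2)[OF sb xt ys] by simp
  ultimately show ?thesis using ra rb yb s_def t_def b_def by simp
qed

lemma iso: "gpd_iso (restrict_gpd GG (ev ` objs G)) G"
  unfolding gpd_iso_def restrict_simps R_eq
  apply (intro exI[of _ fo] exI[of _ fa] conjI ballI)
  subgoal using obj_homeo GG_simps by simp
  subgoal using arr_homeo GG_simps by simp
  subgoal for A using src_eq germs_top GG_simps by simp
  subgoal for A using rng_eq germs_top GG_simps by simp
  subgoal for A using inv_eq germs_top GG_simps by simp
  subgoal premises prems for \<phi>
  proof -
    obtain x where x: "x \<in> objs G" "\<phi> = ev x" using prems by auto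
    show ?thesis using ident_eq[OF x(1)] fo_ev[OF x(1)] x by simp
  qed
  subgoal premises prems for p
  proof (cases p)
    case (Pair g h)
    then have gh: "g \<in> germs" "h \<in> germs" "src GG g = rng GG h"
      using prems unfolding composable_def restrict_simps R_eq using germs_top GG_simps by auto
    show ?thesis using comp_eq[OF gh] Pair by simp
  qed
  done

end

theorem proposition5p4:
  fixes G :: "('o, 'a) tgpd"
  assumes "etale G"
    and "sober (obj_top G)"
  defines "X \<equiv> {phi_irr G e | e. irreducible_idem G e}"
  shows "(\<forall>e. irreducible_idem G e \<longrightarrow>
            phi_irr G e \<in> characters (Bis G) (bis_mult G) (bis_one G) bis_zero)
       \<and> S_invariant (Bis G) (bis_mult G) (bis_star G) (bis_one G) bis_zero X
       \<and> gpd_iso (restrict_gpd (germ_groupoid (Bis G) (bis_mult G) (bis_star G) (bis_one G) bis_zero) X) G"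
proof -
  interpret setg G using assms(1,2) by (unfold_locales) auto
  have XE: "X = ev ` objs G" unfolding X_def by (rule X_eq)
  have P1: "\<forall>e. irreducible_idem G e \<longrightarrow>
            phi_irr G e \<in> characters (Bis G) (bis_mult G) (bis_one G) bis_zero" using part1 by blast
  have P2: "S_invariant (Bis G) (bis_mult G) (bis_star G) (bis_one G) bis_zero X" unfolding XE by (rule part2)
  have P3: "gpd_iso (restrict_gpd (germ_groupoid (Bis G) (bis_mult G) (bis_star G) (bis_one G) bis_zero) X) G"
    unfolding XE by (rule iso)
  show ?thesis using P1 P2 P3 by blast
qed


end
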